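(* Let $(X,\Sigma)$ be a measurable space and $p$ a transition function on it with associated operator $A$ on $ba(X,\Sigma)$. Suppose $A$ has a finitely additive cycle of measures $K=\{\mu_1,\dots,\mu_m\}\subset S_{ba}$ (of any period $m$) whose mean measure $\mu=\frac1m\sum_{i=1}^m\mu_i$ is the only invariant finitely additive probability measure of $A$, i.e. $\Delta_{ba}=\{\mu\}$. Then the cycle $K$ (all $\mu_i$) and its mean measure $\mu$ are countably additive.
   Context: $X$ is an arbitrary infinite set and $\Sigma$ a $\sigma$-algebra of subsets of $X$ containing all one-point sets. $ba(X,\Sigma)$ denotes the space of bounded finitely additive real-valued measures on $\Sigma$, $S_{ba}=\{\mu\in ba(X,\Sigma):\mu\ge0,\ \mu(X)=1\}$, and $\Delta_{ba}=\{\mu\in S_{ba}:A\mu=\mu\}$. A transition function is a map $p(x,E)$ with $0\le p(x,E)\le1$, $p(x,X)=1$, $p(\cdot,E)$ bounded $\Sigma$-measurable for every $E\in\Sigma$, and $p(x,\cdot)$ countably additive for every $x\in X$. The Markov operator is $A\mu(E)=\int_X p(x,E)\,\mu(dx)$. A cycle of measures of $A$ is a finite numbered set $\{\mu_1,\dots,\mu_m\}$ of pairwise different positive finitely additive measures with $A\mu_i=\mu_{i+1}$ ($1\le i\le m-1$), $A\mu_m=\mu_1$. *)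

theory Defs
  imports "HOL-Analysis.Analysis"
begin

text \<open>Measurable space (X, Sigma) is represented by a measure M with X = space M and
Sigma = sets M (the measure component of M is irrelevant).
Set functions are represented as functions 'a set => real; elements of ba(X,Sigma)
are normalised to vanish outside Sigma, so equality of measures is plain equality.\<close>

definition ba :: "'a measure \<Rightarrow> ('a set \<Rightarrow> real) set" where
  "ba M = {\<mu>. (\<forall>E. E \<notin> sets M \<longrightarrow> \<mu> E = 0)
              \<and> \<mu> {} = 0
              \<and> (\<forall>A\<in>sets M. \<forall>B\<in>sets M. A \<inter> B = {} \<longrightarrow> \<mu> (A \<union> B) = \<mu> A + \<mu> B)
              \<and> (\<exists>c. \<forall>A\<in>sets M. \<bar>\<mu> A\<bar> \<le> c)}"

definition S_ba :: "'a measure \<Rightarrow> ('a set \<Rightarrow> real) set" where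
  "S_ba M = {\<mu>\<in>ba M. (\<forall>A\<in>sets M. 0 \<le> \<mu> A) \<and> \<mu> (space M) = 1}"

definition countably_additive_on :: "'a measure \<Rightarrow> ('a set \<Rightarrow> real) \<Rightarrow> bool" where
  "countably_additive_on M \<mu> \<longleftrightarrow>
     (\<forall>F::nat \<Rightarrow> 'a set. range F \<subseteq> sets M \<longrightarrow> disjoint_family F \<longrightarrow>
        (\<lambda>n. \<mu> (F n)) sums \<mu> (\<Union>n. F n))"

definition transition_function :: "'a measure \<Rightarrow> ('a \<Rightarrow> 'a set \<Rightarrow> real) \<Rightarrow> bool" where
  "transition_function M p \<longleftrightarrow>
     (\<forall>x\<in>space M. \<forall>E\<in>sets M. 0 \<le> p x E \<and> p x E \<le> 1)
   \<and> (\<forall>x\<in>space M. p x (space M) = 1)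
   \<and> (\<forall>E\<in>sets M. (\<lambda>x. p x E) \<in> borel_measurable M)
   \<and> (\<forall>x\<in>space M. countably_additive_on M (p x))"

definition fa_partitions :: "'a measure \<Rightarrow> 'a set set set" where
  "fa_partitions M = {P. finite P \<and> P \<subseteq> sets M \<and> {} \<notin> P \<and> \<Union>P = space M
                        \<and> disjoint P}"

definition fa_integral :: "'a measure \<Rightarrow> ('a set \<Rightarrow> real) \<Rightarrow> ('a \<Rightarrow> real) \<Rightarrow> real" where
  "fa_integral M \<mu> f = (SUP P\<in>fa_partitions M. \<Sum>B\<in>P. (INF x\<in>B. f x) * \<mu> B)"

definition markov_op :: "'a measure \<Rightarrow> ('a \<Rightarrow> 'a set \<Rightarrow> real) \<Rightarrow> ('a set \<Rightarrow> real) \<Rightarrow> ('a set \<Rightarrow> real)" where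
  "markov_op M p \<mu> = (\<lambda>E. if E \<in> sets M then fa_integral M \<mu> (\<lambda>x. p x E) else 0)"

definition Delta_ba :: "'a measure \<Rightarrow> ('a \<Rightarrow> 'a set \<Rightarrow> real) \<Rightarrow> ('a set \<Rightarrow> real) set" where
  "Delta_ba M p = {\<nu>\<in>S_ba M. markov_op M p \<nu> = \<nu>}"

text \<open>Cycle of measures mu 0, ..., mu (m-1) (indices shifted from 1..m).\<close>
definition is_cycle :: "'a measure \<Rightarrow> ('a \<Rightarrow> 'a set \<Rightarrow> real) \<Rightarrow> nat \<Rightarrow> (nat \<Rightarrow> 'a set \<Rightarrow> real) \<Rightarrow> bool" where
  "is_cycle M p m \<mu> \<longleftrightarrow> m \<ge> 1 \<and> inj_on \<mu> {..<m}
     \<and> (\<forall>i<m. \<mu> i \<in> ba M \<and> (\<forall>A\<in>sets M. 0 \<le> \<mu> i A))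
     \<and> (\<forall>i. Suc i < m \<longrightarrow> markov_op M p (\<mu> i) = \<mu> (Suc i))
     \<and> markov_op M p (\<mu> (m - 1)) = \<mu> 0"

definition mean_measure :: "nat \<Rightarrow> (nat \<Rightarrow> 'a set \<Rightarrow> real) \<Rightarrow> 'a set \<Rightarrow> real" where
  "mean_measure m \<mu> = (\<lambda>E. (\<Sum>i<m. \<mu> i E) / real m)"

end

theory Submission
  imports Defs
begin

definition fa_on :: "'a measure \<Rightarrow> ('a set \<Rightarrow> real) \<Rightarrow> bool" where
  "fa_on M \<nu> \<longleftrightarrow> \<nu> {} = 0 \<and> (\<forall>A\<in>sets M. \<forall>B\<in>sets M. A \<inter> B = {} \<longrightarrow> \<nu> (A \<union> B) = \<nu> A + \<nu> B)"

definition pos_on :: "'a measure \<Rightarrow> ('a set \<Rightarrow> real) \<Rightarrow> bool" where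
  "pos_on M \<nu> \<longleftrightarrow> (\<forall>A\<in>sets M. 0 \<le> \<nu> A)"

lemma ba_fa: "\<nu> \<in> ba M \<Longrightarrow> fa_on M \<nu>"
  by (simp add: ba_def fa_on_def)

lemma S_ba_fa: "\<nu> \<in> S_ba M \<Longrightarrow> fa_on M \<nu>" and S_ba_pos: "\<nu> \<in> S_ba M \<Longrightarrow> pos_on M \<nu>"
  by (auto simp: S_ba_def ba_def fa_on_def pos_on_def)

lemma fa_diff:
  assumes "fa_on M \<nu>" "A \<in> sets M" "B \<in> sets M" "A \<subseteq> B"
  shows "\<nu> (B - A) = \<nu> B - \<nu> A"
proof -
  have "\<nu> (A \<union> (B - A)) = \<nu> A + \<nu> (B - A)"
    using assms unfolding fa_on_def by blast
  moreover have "A \<union> (B - A) = B" using assms by auto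
  ultimately show ?thesis by simp
qed

lemma fa_mono:
  assumes "fa_on M \<nu>" "pos_on M \<nu>" "A \<in> sets M" "B \<in> sets M" "A \<subseteq> B"
  shows "\<nu> A \<le> \<nu> B"
proof -
  have "B - A \<in> sets M" using assms by auto
  then show ?thesis using fa_diff[OF assms(1,3,4,5)] assms(2) unfolding pos_on_def by force
qed

lemma fa_Un:
  assumes "fa_on M \<nu>" "A \<in> sets M" "B \<in> sets M" "A \<inter> B = {}"
  shows "\<nu> (A \<union> B) = \<nu> A + \<nu> B"
  using assms unfolding fa_on_def by blast

lemma fa_sum:
  assumes "fa_on M \<nu>" "finite I" "h ` I \<subseteq> sets M" "disjoint_family_on h I"
  shows "\<nu> (\<Union>i\<in>I. h i) = (\<Sum>i\<in>I. \<nu> (h i))"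
  using assms(2,3,4)
proof (induction I rule: finite_induct)
  case empty
  then show ?case using assms(1) by (simp add: fa_on_def)
next
  case (insert i I)
  have d: "disjoint_family_on h I" using insert.prems(2) by (meson disjoint_family_on_mono subset_insertI)
  have m: "(\<Union>i\<in>I. h i) \<in> sets M" using insert.prems(1) insert.hyps(1) by auto
  have "h i \<inter> (\<Union>i\<in>I. h i) = {}" using insert.prems(2) insert.hyps(2)
    unfolding disjoint_family_on_def by auto
  then have "\<nu> (h i \<union> (\<Union>i\<in>I. h i)) = \<nu> (h i) + \<nu> (\<Union>i\<in>I. h i)"
    using fa_Un[OF assms(1) _ m] insert.prems(1) by auto
  then show ?case using insert d by simp
qed

lemma partition_sum:
  assumes "fa_on M \<nu>" "P \<in> fa_partitions M" "E \<in> sets M"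
  shows "\<nu> E = (\<Sum>B\<in>P. \<nu> (E \<inter> B))"
proof -
  have P: "finite P" "P \<subseteq> sets M" "\<Union>P = space M" "disjoint P"
    using assms(2) by (auto simp: fa_partitions_def)
  have "E = (\<Union>B\<in>P. E \<inter> B)" using P(3) sets.sets_into_space[OF assms(3)] by auto
  moreover have "disjoint_family_on (\<lambda>B. E \<inter> B) P"
    using P(4) unfolding disjoint_family_on_def disjoint_def by auto
  ultimately show ?thesis using fa_sum[OF assms(1) P(1), of "\<lambda>B. E \<inter> B"] P(2) assms(3) by auto
qed

lemma partition_total:
  assumes "fa_on M \<nu>" "P \<in> fa_partitions M"
  shows "\<nu> (space M) = (\<Sum>B\<in>P. \<nu> B)"
proof -
  have "\<And>B. B \<in> P \<Longrightarrow> space M \<inter> B = B" using assms(2) by (auto simp: fa_partitions_def)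
  then show ?thesis using partition_sum[OF assms(1,2) sets.top] by simp
qed

lemma ca_cont:
  assumes "countably_additive_on M \<nu>" "\<And>n. G n \<in> sets M" "decseq G" "(\<Inter>n. G n) = {}"
  shows "(\<lambda>n. \<nu> (G n)) \<longlonglongrightarrow> 0"
proof -
  define D where "D j = G j - G (Suc j)" for j
  have Dm: "range D \<subseteq> sets M" using assms(2) by (auto simp: D_def)
  have Dd: "disjoint_family D"
    unfolding disjoint_family_on_def D_def
  proof (intro ballI impI)
    have *: "(G i - G (Suc i)) \<inter> (G j - G (Suc j)) = {}" if "i < j" for i j
    proof -
      have "G j \<subseteq> G (Suc i)" using decseqD[OF assms(3), of "Suc i" j] that by simp
      then show ?thesis by blast
    qed
    fix i j :: nat assume "i \<noteq> j"
    then show "(G i - G (Suc i)) \<inter> (G j - G (Suc j)) = {}"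
      using *[of i j] *[of j i] by (cases "i < j") auto
  qed
  have U: "(\<Union>j. D (j + N)) = G N" for N
  proof
    show "(\<Union>j. D (j + N)) \<subseteq> G N"
    proof
      fix x assume "x \<in> (\<Union>j. D (j + N))"
      then obtain j where "x \<in> G (j + N)" unfolding D_def by auto
      moreover have "G (j + N) \<subseteq> G N" using decseqD[OF assms(3), of N "j + N"] by simp
      ultimately show "x \<in> G N" by blast
    qed
    show "G N \<subseteq> (\<Union>j. D (j + N))"
    proof
      fix x assume x: "x \<in> G N"
      obtain k where "x \<notin> G k" using assms(4) by auto
      define S where "S = {j. x \<notin> G (j + N)}"
      have "G (k + N) \<subseteq> G k" using decseqD[OF assms(3), of k "k + N"] by simp
      then have "k \<in> S" using \<open>x \<notin> G k\<close> unfolding S_def by blast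
      then have "S \<noteq> {}" by blast
      define j where "j = Least (\<lambda>j. x \<notin> G (j + N))"
      have ex: "\<exists>j. x \<notin> G (j + N)" using \<open>k \<in> S\<close> unfolding S_def by blast
      have j1: "x \<notin> G (j + N)" unfolding j_def by (rule LeastI_ex[OF ex])
      have "j \<noteq> 0"
      proof
        assume "j = 0" with j1 x show False by simp
      qed
      then obtain i where i: "j = Suc i" using not0_implies_Suc by blast
      have "x \<in> G (i + N)" using i j_def not_less_Least[of i "\<lambda>j. x \<notin> G (j + N)"] by auto
      then have "x \<in> D (i + N)" using j1 i by (simp add: D_def)
      then show "x \<in> (\<Union>j. D (j + N))" by blast
    qed
  qed
  have s: "(\<lambda>j. \<nu> (D (j + N))) sums \<nu> (G N)" for N
  proof -
    have "range (\<lambda>j. D (j + N)) \<subseteq> sets M" using Dm by auto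
    moreover have "disjoint_family (\<lambda>j. D (j + N))" using Dd unfolding disjoint_family_on_def by auto
    ultimately show ?thesis using assms(1) U[of N] unfolding countably_additive_on_def by metis
  qed
  have "(\<lambda>j. \<nu> (D j)) sums (\<nu> (G N) + (\<Sum>j<N. \<nu> (D j)))" for N
    using sums_iff_shift[of "\<lambda>j. \<nu> (D j)" N "\<nu> (G N)"] s[of N] by simp
  moreover have "(\<lambda>j. \<nu> (D j)) sums \<nu> (G 0)" using s[of 0] by simp
  ultimately have e1: "\<nu> (G N) + (\<Sum>j<N. \<nu> (D j)) = \<nu> (G 0)" for N
    by (rule sums_unique2)
  have e: "\<nu> (G N) = \<nu> (G 0) - (\<Sum>j<N. \<nu> (D j))" for N
    using e1[of N] by linarith
  have "(\<lambda>N. \<Sum>j<N. \<nu> (D j)) \<longlonglongrightarrow> \<nu> (G 0)" using s[of 0] by (simp add: sums_def)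
  then have "(\<lambda>N. \<nu> (G 0) - (\<Sum>j<N. \<nu> (D j))) \<longlonglongrightarrow> \<nu> (G 0) - \<nu> (G 0)"
    by (intro tendsto_intros)
  then have "(\<lambda>N. \<nu> (G 0) - (\<Sum>j<N. \<nu> (D j))) \<longlonglongrightarrow> 0" by simp
  moreover have "(\<lambda>N. \<nu> (G N)) = (\<lambda>N. \<nu> (G 0) - (\<Sum>j<N. \<nu> (D j)))"
    by (rule ext) (rule e)
  ultimately show ?thesis by simp
qed

lemma ca_imp_fa:
  assumes "countably_additive_on M \<nu>"
  shows "fa_on M \<nu>"
proof -
  have "(\<lambda>n. \<nu> {}) sums \<nu> (\<Union>n. {})"
    using assms unfolding countably_additive_on_def by (auto simp: disjoint_family_on_def)
  then have "(\<lambda>n. \<nu> {}) \<longlonglongrightarrow> 0" using summable_LIMSEQ_zero sums_summable by blast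
  then have e: "\<nu> {} = 0" using LIMSEQ_const_iff by blast
  show ?thesis unfolding fa_on_def
  proof (intro conjI e ballI impI)
    fix A B assume AB: "A \<in> sets M" "B \<in> sets M" "A \<inter> B = {}"
    define F where "F n = (if n = 0 then A else if n = 1 then B else {})" for n :: nat
    have "range F \<subseteq> sets M" using AB by (auto simp: F_def)
    moreover have "disjoint_family F" using AB unfolding disjoint_family_on_def F_def by auto
    ultimately have "(\<lambda>n. \<nu> (F n)) sums \<nu> (\<Union>n. F n)" using assms unfolding countably_additive_on_def by blast
    moreover have "(\<Union>n. F n) = A \<union> B"
    proof
      show "(\<Union>n. F n) \<subseteq> A \<union> B" by (auto simp: F_def split: if_splits)
      show "A \<union> B \<subseteq> (\<Union>n. F n)" 
      proof
        fix x assume "x \<in> A \<union> B"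
        then have "x \<in> F 0 \<or> x \<in> F 1" by (simp add: F_def)
        then show "x \<in> (\<Union>n. F n)" by blast
      qed
    qed
    moreover have "(\<lambda>n. \<nu> (F n)) sums (\<Sum>n\<in>{0,1}. \<nu> (F n))"
      by (rule sums_finite) (auto simp: F_def e)
    moreover have "(\<Sum>n\<in>{0,1}. \<nu> (F n)) = \<nu> A + \<nu> B" by (simp add: F_def)
    ultimately show "\<nu> (A \<union> B) = \<nu> A + \<nu> B" using sums_unique2 by metis
  qed
qed

lemma fa_finite_union:
  fixes F :: "nat \<Rightarrow> 'a set"
  assumes "fa_on M \<nu>" "range F \<subseteq> sets M" "disjoint_family F"
  shows "\<nu> (\<Union>j<n. F j) = (\<Sum>j<n. \<nu> (F j))"
proof -
  have "disjoint_family_on F {..<n}" using assms(3) by (auto simp: disjoint_family_on_def)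
  moreover have "F ` {..<n} \<subseteq> sets M" using assms(2) by auto
  ultimately show ?thesis using fa_sum[OF assms(1), of "{..<n}" F] by simp
qed

lemma cont_imp_ca:
  assumes "fa_on M \<nu>"
    and cont: "\<And>G. (\<And>n. G n \<in> sets M) \<Longrightarrow> decseq G \<Longrightarrow> (\<Inter>n. G n) = {} \<Longrightarrow> (\<lambda>n. \<nu> (G n)) \<longlonglongrightarrow> 0"
  shows "countably_additive_on M \<nu>"
  unfolding countably_additive_on_def
proof (intro allI impI)
  fix F :: "nat \<Rightarrow> 'a set" assume F: "range F \<subseteq> sets M" "disjoint_family F"
  define G where "G n = (\<Union>j\<in>{n..}. F j)" for n
  have Gm: "G n \<in> sets M" for n using F(1) unfolding G_def by auto
  have Gd: "decseq G" unfolding decseq_def G_def by (intro allI impI UN_mono) auto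
  have Ge: "(\<Inter>n. G n) = {}"
  proof -
    { fix x assume "x \<in> (\<Inter>n. G n)"
      then obtain j where j: "x \<in> F j" unfolding G_def by auto
      from \<open>x \<in> (\<Inter>n. G n)\<close> obtain k where "k \<ge> Suc j" "x \<in> F k" unfolding G_def by blast
      moreover have "F j \<inter> F k = {}" using F(2) \<open>k \<ge> Suc j\<close> unfolding disjoint_family_on_def by auto
      ultimately have False using j by blast }
    then show ?thesis by blast
  qed
  have U: "(\<Union>n. F n) = (\<Union>j<n. F j) \<union> G n" for n
  proof
    show "(\<Union>n. F n) \<subseteq> (\<Union>j<n. F j) \<union> G n"
    proof
      fix x assume "x \<in> (\<Union>n. F n)"
      then obtain k where k: "x \<in> F k" by auto
      show "x \<in> (\<Union>j<n. F j) \<union> G n"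
      proof (cases "k < n")
        case True then show ?thesis using k by auto
      next
        case False then show ?thesis using k unfolding G_def by auto
      qed
    qed
  qed (auto simp: G_def)
  have D: "(\<Union>j<n. F j) \<inter> G n = {}" for n
  proof -
    { fix x j k assume "j < n" "k \<ge> n" "x \<in> F j" "x \<in> F k"
      moreover have "F j \<inter> F k = {}" using F(2) \<open>j < n\<close> \<open>k \<ge> n\<close> unfolding disjoint_family_on_def by auto
      ultimately have False by blast }
    then show ?thesis unfolding G_def by auto
  qed
  have e: "\<nu> (\<Union>n. F n) = (\<Sum>j<n. \<nu> (F j)) + \<nu> (G n)" for n
  proof -
    have "(\<Union>j<n. F j) \<in> sets M" using F(1) by auto
    then show ?thesis using fa_Un[OF assms(1) _ Gm D] U[of n] fa_finite_union[OF assms(1) F] by simp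
  qed
  have "(\<lambda>n. \<nu> (\<Union>n. F n) - \<nu> (G n)) \<longlonglongrightarrow> \<nu> (\<Union>n. F n) - 0"
    by (intro tendsto_intros cont[OF Gm Gd Ge])
  moreover have "(\<lambda>n. \<nu> (\<Union>n. F n) - \<nu> (G n)) = (\<lambda>n. \<Sum>j<n. \<nu> (F j))"
    using e by (auto simp: fun_eq_iff algebra_simps)
  ultimately show "(\<lambda>n. \<nu> (F n)) sums \<nu> (\<Union>n. F n)" unfolding sums_def by simp
qed


definition lowsum :: "'a set set \<Rightarrow> ('a set \<Rightarrow> real) \<Rightarrow> ('a \<Rightarrow> real) \<Rightarrow> real" where
  "lowsum P \<nu> f = (\<Sum>B\<in>P. (INF x\<in>B. f x) * \<nu> B)"

definition upsum :: "'a set set \<Rightarrow> ('a set \<Rightarrow> real) \<Rightarrow> ('a \<Rightarrow> real) \<Rightarrow> real" where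
  "upsum P \<nu> f = (\<Sum>B\<in>P. (SUP x\<in>B. f x) * \<nu> B)"

definition bnd :: "'a measure \<Rightarrow> ('a \<Rightarrow> real) \<Rightarrow> bool" where
  "bnd M f \<longleftrightarrow> (\<exists>c. \<forall>x\<in>space M. \<bar>f x\<bar> \<le> c)"

lemma part_props:
  assumes "P \<in> fa_partitions M" "B \<in> P"
  shows "B \<noteq> {}" "B \<in> sets M" "B \<subseteq> space M" "finite P"
  using assms by (auto simp: fa_partitions_def)

lemma part_nonempty: "fa_partitions M \<noteq> {}"
proof (cases "space M = {}")
  case True
  then have "{} \<in> fa_partitions M" by (auto simp: fa_partitions_def disjoint_def)
  then show ?thesis by blast
next
  case False
  then have "{space M} \<in> fa_partitions M" by (auto simp: fa_partitions_def disjoint_def)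
  then show ?thesis by blast
qed

lemma inf_le:
  assumes "bnd M f" "B \<subseteq> space M" "y \<in> B"
  shows "(INF x\<in>B. f x) \<le> f y"
proof -
  obtain c where c: "\<forall>x\<in>space M. \<bar>f x\<bar> \<le> c" using assms(1) by (auto simp: bnd_def)
  have "bdd_below (f ` B)" using c assms(2) by (intro bdd_belowI[of _ "-c"]) force
  then show ?thesis using assms(3) by (simp add: cINF_lower)
qed

lemma le_sup:
  assumes "bnd M f" "B \<subseteq> space M" "y \<in> B"
  shows "f y \<le> (SUP x\<in>B. f x)"
proof -
  obtain c where c: "\<forall>x\<in>space M. \<bar>f x\<bar> \<le> c" using assms(1) by (auto simp: bnd_def)
  have "bdd_above (f ` B)" using c assms(2) by (intro bdd_aboveI[of _ "c"]) force
  then show ?thesis using assms(3) by (simp add: cSUP_upper)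
qed

lemma lowsum_le_upsum:
  assumes "fa_on M \<nu>" "pos_on M \<nu>" "bnd M f" "P \<in> fa_partitions M" "Q \<in> fa_partitions M"
  shows "lowsum Q \<nu> f \<le> upsum P \<nu> f"
proof -
  have fP: "finite P" and fQ: "finite Q" using assms(4,5) by (auto simp: fa_partitions_def)
  have "lowsum Q \<nu> f = (\<Sum>C\<in>Q. (INF x\<in>C. f x) * (\<Sum>B\<in>P. \<nu> (C \<inter> B)))"
    unfolding lowsum_def using partition_sum[OF assms(1,4)] part_props[OF assms(5)] by simp
  also have "\<dots> = (\<Sum>C\<in>Q. \<Sum>B\<in>P. (INF x\<in>C. f x) * \<nu> (C \<inter> B))"
    by (simp add: sum_distrib_left)
  also have "\<dots> \<le> (\<Sum>C\<in>Q. \<Sum>B\<in>P. (SUP x\<in>B. f x) * \<nu> (C \<inter> B))"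
  proof (intro sum_mono)
    fix C B assume C: "C \<in> Q" and B: "B \<in> P"
    show "(INF x\<in>C. f x) * \<nu> (C \<inter> B) \<le> (SUP x\<in>B. f x) * \<nu> (C \<inter> B)"
    proof (cases "C \<inter> B = {}")
      case True
      then show ?thesis using assms(1) by (simp add: fa_on_def)
    next
      case False
      then obtain y where y: "y \<in> C" "y \<in> B" by blast
      have "(INF x\<in>C. f x) \<le> (SUP x\<in>B. f x)"
        using inf_le[OF assms(3) part_props(3)[OF assms(5) C] y(1)]
          le_sup[OF assms(3) part_props(3)[OF assms(4) B] y(2)] by linarith
      moreover have "0 \<le> \<nu> (C \<inter> B)"
        using assms(2) part_props(2)[OF assms(5) C] part_props(2)[OF assms(4) B]
        unfolding pos_on_def by blast
      ultimately show ?thesis by (simp add: mult_right_mono)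
    qed
  qed
  also have "\<dots> = (\<Sum>B\<in>P. (SUP x\<in>B. f x) * (\<Sum>C\<in>Q. \<nu> (B \<inter> C)))"
    by (subst sum.swap) (simp add: sum_distrib_left Int_commute)
  also have "\<dots> = upsum P \<nu> f"
    unfolding upsum_def using partition_sum[OF assms(1,5)] part_props[OF assms(4)] by simp
  finally show ?thesis .
qed

lemma fa_int_le_upsum:
  assumes "fa_on M \<nu>" "pos_on M \<nu>" "bnd M f" "P \<in> fa_partitions M"
  shows "fa_integral M \<nu> f \<le> upsum P \<nu> f"
  unfolding fa_integral_def
  by (rule cSUP_least[OF part_nonempty]) (fold lowsum_def, rule lowsum_le_upsum[OF assms])

lemma lowsum_le_fa_int:
  assumes "fa_on M \<nu>" "pos_on M \<nu>" "bnd M f" "P \<in> fa_partitions M"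
  shows "lowsum P \<nu> f \<le> fa_integral M \<nu> f"
proof -
  have "bdd_above ((\<lambda>P. lowsum P \<nu> f) ` fa_partitions M)"
    by (rule bdd_aboveI[of _ "upsum P \<nu> f"]) (use lowsum_le_upsum[OF assms(1-4)] in auto)
  then show ?thesis unfolding fa_integral_def lowsum_def[symmetric]
    using assms(4) by (rule cSUP_upper2) simp
qed

lemma fine_partition:
  assumes "finite F" "\<And>f. f \<in> F \<Longrightarrow> f \<in> borel_measurable M" "\<And>f. f \<in> F \<Longrightarrow> bnd M f" "(\<delta>::real) > 0"
  shows "\<exists>P\<in>fa_partitions M. \<forall>B\<in>P. \<forall>f\<in>F. \<forall>x\<in>B. \<forall>y\<in>B. \<bar>f x - f y\<bar> < \<delta>"
proof -
  obtain cf where cf: "\<And>f x. f \<in> F \<Longrightarrow> x \<in> space M \<Longrightarrow> \<bar>f x\<bar> \<le> cf f"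
    using assms(3) unfolding bnd_def by metis
  define c where "c = (\<Sum>f\<in>F. \<bar>cf f\<bar>)"
  have c: "\<bar>f x\<bar> \<le> c" if "f \<in> F" "x \<in> space M" for f x
  proof -
    have "\<bar>cf f\<bar> \<le> c" unfolding c_def using assms(1) that(1)
      by (intro member_le_sum) auto
    then show ?thesis using cf[OF that] by linarith
  qed
  define \<kappa> where "\<kappa> x = (\<lambda>f. if f \<in> F then \<lfloor>f x / \<delta>\<rfloor> else undefined)" for x
  define P where "P = (\<lambda>x. {y\<in>space M. \<kappa> y = \<kappa> x}) ` space M"
  have \<kappa>_eq: "\<kappa> y = \<kappa> x \<longleftrightarrow> (\<forall>f\<in>F. \<lfloor>f y / \<delta>\<rfloor> = \<lfloor>f x / \<delta>\<rfloor>)" for x y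
    unfolding \<kappa>_def by (auto simp: fun_eq_iff)
  have fin: "finite (\<kappa> ` space M)"
  proof (rule finite_subset)
    show "\<kappa> ` space M \<subseteq> PiE F (\<lambda>_. {\<lfloor>-c/\<delta>\<rfloor>..\<lfloor>c/\<delta>\<rfloor>})"
    proof
      fix g assume "g \<in> \<kappa> ` space M"
      then obtain x where x: "x \<in> space M" "g = \<kappa> x" by auto
      have "\<lfloor>f x / \<delta>\<rfloor> \<in> {\<lfloor>-c/\<delta>\<rfloor>..\<lfloor>c/\<delta>\<rfloor>}" if "f \<in> F" for f
      proof -
        have "-c \<le> f x" "f x \<le> c" using c[OF that x(1)] by arith+
        have "(-c) / \<delta> \<le> f x / \<delta>"
          by (rule divide_right_mono) (use \<open>-c \<le> f x\<close> assms(4) in auto)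
        moreover have "f x / \<delta> \<le> c / \<delta>"
          by (rule divide_right_mono) (use \<open>f x \<le> c\<close> assms(4) in auto)
        ultimately show ?thesis by (auto intro: floor_mono)
      qed
      then show "g \<in> PiE F (\<lambda>_. {\<lfloor>-c/\<delta>\<rfloor>..\<lfloor>c/\<delta>\<rfloor>})"
        using x unfolding \<kappa>_def by (auto simp: PiE_def extensional_def)
    qed
    show "finite (PiE F (\<lambda>_. {\<lfloor>-c/\<delta>\<rfloor>..\<lfloor>c/\<delta>\<rfloor>}))"
      using assms(1) by (intro finite_PiE) auto
  qed
  have "P = (\<lambda>k. {y\<in>space M. \<kappa> y = k}) ` (\<kappa> ` space M)" unfolding P_def by auto
  then have Pfin: "finite P" using fin by simp
  have Psets: "P \<subseteq> sets M"
  proof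
    fix B assume "B \<in> P"
    then obtain x where x: "x \<in> space M" "B = {y\<in>space M. \<kappa> y = \<kappa> x}" unfolding P_def by auto
    have "B = space M \<inter> (\<Inter>f\<in>F. {y\<in>space M. \<lfloor>f y / \<delta>\<rfloor> = \<lfloor>f x / \<delta>\<rfloor>})"
      using x(2) \<kappa>_eq by auto
    moreover have "{y\<in>space M. \<lfloor>f y / \<delta>\<rfloor> = \<lfloor>f x / \<delta>\<rfloor>} \<in> sets M" if "f \<in> F" for f
      using assms(2)[OF that] by measurable
    ultimately show "B \<in> sets M" using assms(1)
      by (cases "F = {}") (auto intro!: sets.Int sets.finite_INT)
  qed
  have "P \<in> fa_partitions M"
    unfolding fa_partitions_def
  proof (intro CollectI conjI Pfin Psets)
    show "{} \<notin> P" unfolding P_def by auto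
    show "\<Union>P = space M" unfolding P_def by auto
    show "disjoint P" unfolding P_def disjoint_def by auto
  qed
  moreover have "\<forall>B\<in>P. \<forall>f\<in>F. \<forall>x\<in>B. \<forall>y\<in>B. \<bar>f x - f y\<bar> < \<delta>"
  proof (intro ballI)
    fix B f x y assume B: "B \<in> P" and f: "f \<in> F" and xy: "x \<in> B" "y \<in> B"
    then have "\<lfloor>f x / \<delta>\<rfloor> = \<lfloor>f y / \<delta>\<rfloor>" unfolding P_def using \<kappa>_eq f by auto
    then have "\<bar>f x / \<delta> - f y / \<delta>\<bar> < 1"
    proof -
      have e: "real_of_int \<lfloor>f x / \<delta>\<rfloor> = real_of_int \<lfloor>f y / \<delta>\<rfloor>" using \<open>\<lfloor>f x / \<delta>\<rfloor> = \<lfloor>f y / \<delta>\<rfloor>\<close> by simp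
      have "real_of_int \<lfloor>f x / \<delta>\<rfloor> \<le> f x / \<delta>" "f x / \<delta> < real_of_int \<lfloor>f x / \<delta>\<rfloor> + 1"
           "real_of_int \<lfloor>f y / \<delta>\<rfloor> \<le> f y / \<delta>" "f y / \<delta> < real_of_int \<lfloor>f y / \<delta>\<rfloor> + 1"
        by linarith+
      then show ?thesis using e by linarith
    qed
    then have "f x / \<delta> < f y / \<delta> + 1" "f y / \<delta> < f x / \<delta> + 1" by linarith+
    then have "f x < f y + \<delta>" "f y < f x + \<delta>" using assms(4) by (simp_all add: field_simps)
    then show "\<bar>f x - f y\<bar> < \<delta>" by linarith
  qed
  ultimately show ?thesis by blast
qed


lemma squeeze_eq:
  fixes a b K :: real
  assumes "K \<ge> 0" "\<And>\<delta>. \<delta> > 0 \<Longrightarrow> \<bar>a - b\<bar> \<le> \<delta> * K"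
  shows "a = b"
proof (rule ccontr)
  assume "a \<noteq> b"
  then have d: "\<bar>a - b\<bar> > 0" by simp
  define \<delta> where "\<delta> = \<bar>a - b\<bar> / (K + 1)"
  have "\<delta> > 0" using d assms(1) by (simp add: \<delta>_def)
  then have "\<bar>a - b\<bar> \<le> \<delta> * K" by (rule assms(2))
  also have "\<delta> * K < \<delta> * (K + 1)" using \<open>\<delta> > 0\<close> by simp
  also have "\<delta> * (K + 1) = \<bar>a - b\<bar>" using assms(1) by (simp add: \<delta>_def)
  finally show False by simp
qed

definition fine_for :: "'a set set \<Rightarrow> ('a \<Rightarrow> real) \<Rightarrow> real \<Rightarrow> bool" where
  "fine_for P f \<delta> \<longleftrightarrow> (\<forall>B\<in>P. \<forall>x\<in>B. \<forall>y\<in>B. \<bar>f x - f y\<bar> < \<delta>)"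

lemma fine_exists:
  assumes "f \<in> borel_measurable M" "bnd M f" "\<delta> > 0"
  shows "\<exists>P\<in>fa_partitions M. fine_for P f \<delta>"
  using fine_partition[of "{f}" M \<delta>] assms unfolding fine_for_def by auto

lemma fine_exists2:
  assumes "f \<in> borel_measurable M" "bnd M f" "g \<in> borel_measurable M" "bnd M g" "\<delta> > 0"
  shows "\<exists>P\<in>fa_partitions M. fine_for P f \<delta> \<and> fine_for P g \<delta>"
proof -
  have "\<exists>P\<in>fa_partitions M. \<forall>B\<in>P. \<forall>h\<in>{f, g}. \<forall>x\<in>B. \<forall>y\<in>B. \<bar>h x - h y\<bar> < \<delta>"
    by (rule fine_partition) (use assms in auto)
  then obtain P where P: "P \<in> fa_partitions M" "\<forall>B\<in>P. \<forall>h\<in>{f, g}. \<forall>x\<in>B. \<forall>y\<in>B. \<bar>h x - h y\<bar> < \<delta>"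
    by blast
  have "fine_for P f \<delta>" "fine_for P g \<delta>" using P(2) unfolding fine_for_def by blast+
  then show ?thesis using P(1) by blast
qed

lemma sup_le_inf:
  assumes "bnd M f" "P \<in> fa_partitions M" "fine_for P f \<delta>" "B \<in> P"
  shows "(SUP x\<in>B. f x) \<le> (INF x\<in>B. f x) + \<delta>"
proof -
  have B: "B \<noteq> {}" "B \<subseteq> space M" using part_props[OF assms(2,4)] by auto
  obtain c where c: "\<forall>x\<in>space M. \<bar>f x\<bar> \<le> c" using assms(1) by (auto simp: bnd_def)
  have "f y \<le> (INF x\<in>B. f x) + \<delta>" if y: "y \<in> B" for y
  proof -
    have "f y - \<delta> \<le> (INF x\<in>B. f x)"
    proof (rule cINF_greatest[OF B(1)])
      fix x assume "x \<in> B"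
      then have "\<bar>f y - f x\<bar> < \<delta>" using assms(3,4) y unfolding fine_for_def by blast
      then show "f y - \<delta> \<le> f x" by linarith
    qed
    then show ?thesis by linarith
  qed
  then show ?thesis using B(1) by (intro cSUP_least) auto
qed

lemma upsum_le_lowsum:
  assumes "fa_on M \<nu>" "pos_on M \<nu>" "bnd M f" "P \<in> fa_partitions M" "fine_for P f \<delta>"
  shows "upsum P \<nu> f \<le> lowsum P \<nu> f + \<delta> * \<nu> (space M)"
proof -
  have "upsum P \<nu> f \<le> (\<Sum>B\<in>P. ((INF x\<in>B. f x) + \<delta>) * \<nu> B)"
    unfolding upsum_def
  proof (rule sum_mono)
    fix B assume B: "B \<in> P"
    have "0 \<le> \<nu> B" using assms(2) part_props(2)[OF assms(4) B] by (simp add: pos_on_def)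
    then show "(SUP x\<in>B. f x) * \<nu> B \<le> ((INF x\<in>B. f x) + \<delta>) * \<nu> B"
      using sup_le_inf[OF assms(3,4,5) B] by (simp add: mult_right_mono)
  qed
  also have "\<dots> = lowsum P \<nu> f + \<delta> * (\<Sum>B\<in>P. \<nu> B)"
    unfolding lowsum_def by (simp add: algebra_simps sum.distrib sum_distrib_left)
  also have "\<dots> = lowsum P \<nu> f + \<delta> * \<nu> (space M)"
    using partition_total[OF assms(1,4)] by simp
  finally show ?thesis .
qed

lemma fa_int_approx:
  assumes "fa_on M \<nu>" "pos_on M \<nu>" "bnd M f" "P \<in> fa_partitions M" "fine_for P f \<delta>"
  shows "lowsum P \<nu> f \<le> fa_integral M \<nu> f" "fa_integral M \<nu> f \<le> lowsum P \<nu> f + \<delta> * \<nu> (space M)"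
  using lowsum_le_fa_int[OF assms(1-4)] fa_int_le_upsum[OF assms(1-4)] upsum_le_lowsum[OF assms]
  by auto

lemma fa_on_comb:
  assumes "finite K" "\<And>k. k \<in> K \<Longrightarrow> fa_on M (\<nu> k)"
  shows "fa_on M (\<lambda>E. \<Sum>k\<in>K. c k * \<nu> k E)"
  using assms unfolding fa_on_def by (simp add: sum.distrib algebra_simps sum_distrib_left)

lemma pos_on_comb:
  assumes "\<And>k. k \<in> K \<Longrightarrow> pos_on M (\<nu> k)" "\<And>k. k \<in> K \<Longrightarrow> c k \<ge> (0::real)"
  shows "pos_on M (\<lambda>E. \<Sum>k\<in>K. c k * \<nu> k E)"
  using assms unfolding pos_on_def by (auto intro!: sum_nonneg)

lemma fa_int_comb:
  assumes "finite K" "\<And>k. k \<in> K \<Longrightarrow> fa_on M (\<nu> k)" "\<And>k. k \<in> K \<Longrightarrow> pos_on M (\<nu> k)"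
    "\<And>k. k \<in> K \<Longrightarrow> c k \<ge> 0" "f \<in> borel_measurable M" "bnd M f"
  shows "fa_integral M (\<lambda>E. \<Sum>k\<in>K. c k * \<nu> k E) f = (\<Sum>k\<in>K. c k * fa_integral M (\<nu> k) f)"
proof -
  define \<rho> where "\<rho> = (\<lambda>E. \<Sum>k\<in>K. c k * \<nu> k E)"
  have r1: "fa_on M \<rho>" unfolding \<rho>_def by (rule fa_on_comb[OF assms(1,2)])
  have r2: "pos_on M \<rho>" unfolding \<rho>_def by (rule pos_on_comb[OF assms(3,4)])
  have r0: "\<rho> (space M) \<ge> 0" using r2 by (simp add: pos_on_def)
  show ?thesis unfolding \<rho>_def[symmetric]
  proof (rule squeeze_eq[of "2 * \<rho> (space M)"])
    show "0 \<le> 2 * \<rho> (space M)" using r0 by simp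
    fix \<delta> :: real assume "\<delta> > 0"
    then obtain P where P: "P \<in> fa_partitions M" "fine_for P f \<delta>" using fine_exists[OF assms(5,6)] by blast
    have ls: "lowsum P \<rho> f = (\<Sum>k\<in>K. c k * lowsum P (\<nu> k) f)"
      unfolding lowsum_def \<rho>_def by (simp add: sum_distrib_left sum_distrib_right algebra_simps sum.swap[of _ K])
    have a1: "lowsum P \<rho> f \<le> fa_integral M \<rho> f" "fa_integral M \<rho> f \<le> lowsum P \<rho> f + \<delta> * \<rho> (space M)"
      using fa_int_approx[OF r1 r2 assms(6) P] by auto
    have a2: "c k * lowsum P (\<nu> k) f \<le> c k * fa_integral M (\<nu> k) f"
      "c k * fa_integral M (\<nu> k) f \<le> c k * lowsum P (\<nu> k) f + \<delta> * (c k * \<nu> k (space M))" if "k \<in> K" for k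
    proof -
      have "lowsum P (\<nu> k) f \<le> fa_integral M (\<nu> k) f"
        "fa_integral M (\<nu> k) f \<le> lowsum P (\<nu> k) f + \<delta> * \<nu> k (space M)"
        using fa_int_approx[OF assms(2,3)[OF that] assms(6) P] by auto
      then have "c k * lowsum P (\<nu> k) f \<le> c k * fa_integral M (\<nu> k) f"
        "c k * fa_integral M (\<nu> k) f \<le> c k * (lowsum P (\<nu> k) f + \<delta> * \<nu> k (space M))"
        using assms(4)[OF that] by (auto intro: mult_left_mono)
      then show "c k * lowsum P (\<nu> k) f \<le> c k * fa_integral M (\<nu> k) f"
        "c k * fa_integral M (\<nu> k) f \<le> c k * lowsum P (\<nu> k) f + \<delta> * (c k * \<nu> k (space M))"
        by (auto simp: algebra_simps)
    qed
    have s1: "(\<Sum>k\<in>K. c k * lowsum P (\<nu> k) f) \<le> (\<Sum>k\<in>K. c k * fa_integral M (\<nu> k) f)"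
      using a2(1) by (rule sum_mono)
    have s2: "(\<Sum>k\<in>K. c k * fa_integral M (\<nu> k) f) \<le> (\<Sum>k\<in>K. c k * lowsum P (\<nu> k) f) + \<delta> * \<rho> (space M)"
    proof -
      have "(\<Sum>k\<in>K. c k * fa_integral M (\<nu> k) f) \<le> (\<Sum>k\<in>K. c k * lowsum P (\<nu> k) f + \<delta> * (c k * \<nu> k (space M)))"
        using a2(2) by (rule sum_mono)
      then show ?thesis unfolding \<rho>_def by (simp add: sum.distrib sum_distrib_left)
    qed
    show "\<bar>fa_integral M \<rho> f - (\<Sum>k\<in>K. c k * fa_integral M (\<nu> k) f)\<bar> \<le> \<delta> * (2 * \<rho> (space M))"
      using a1 s1 s2 ls by (simp add: abs_le_iff algebra_simps)
  qed
qed

lemma bnd_add: "bnd M f \<Longrightarrow> bnd M g \<Longrightarrow> bnd M (\<lambda>x. f x + g x)"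
proof -
  assume "bnd M f" "bnd M g"
  then obtain c d where "\<forall>x\<in>space M. \<bar>f x\<bar> \<le> c" "\<forall>x\<in>space M. \<bar>g x\<bar> \<le> d" by (auto simp: bnd_def)
  then have "\<forall>x\<in>space M. \<bar>f x + g x\<bar> \<le> c + d" by (smt (verit))
  then show ?thesis by (auto simp: bnd_def)
qed

lemma fa_int_add:
  assumes "fa_on M \<nu>" "pos_on M \<nu>" "f \<in> borel_measurable M" "bnd M f" "g \<in> borel_measurable M" "bnd M g"
  shows "fa_integral M \<nu> (\<lambda>x. f x + g x) = fa_integral M \<nu> f + fa_integral M \<nu> g"
proof (rule squeeze_eq[of "2 * \<nu> (space M)"])
  show "0 \<le> 2 * \<nu> (space M)" using assms(2) by (simp add: pos_on_def)
  have bfg: "bnd M (\<lambda>x. f x + g x)" using bnd_add[OF assms(4,6)] .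
  fix \<delta> :: real assume "\<delta> > 0"
  then obtain P where P: "P \<in> fa_partitions M" "fine_for P f \<delta>" "fine_for P g \<delta>"
    using fine_exists2[OF assms(3-6)] by blast
  have nn: "0 \<le> \<nu> B" if "B \<in> P" for B
    using assms(2) part_props(2)[OF P(1) that] by (simp add: pos_on_def)
  have l: "lowsum P \<nu> f + lowsum P \<nu> g \<le> lowsum P \<nu> (\<lambda>x. f x + g x)"
    unfolding lowsum_def sum.distrib[symmetric]
  proof (rule sum_mono)
    fix B assume B: "B \<in> P"
    have "(INF x\<in>B. f x) + (INF x\<in>B. g x) \<le> (INF x\<in>B. f x + g x)"
    proof (rule cINF_greatest)
      show "B \<noteq> {}" using part_props[OF P(1) B] by auto
      fix x assume "x \<in> B"
      then show "(INF x\<in>B. f x) + (INF x\<in>B. g x) \<le> f x + g x"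
        using inf_le[OF assms(4), of B x] inf_le[OF assms(6), of B x] part_props[OF P(1) B] by auto
    qed
    then show "(INF x\<in>B. f x) * \<nu> B + (INF x\<in>B. g x) * \<nu> B \<le> (INF x\<in>B. f x + g x) * \<nu> B"
      using nn[OF B] by (simp add: distrib_right[symmetric] mult_right_mono)
  qed
  have u: "upsum P \<nu> (\<lambda>x. f x + g x) \<le> upsum P \<nu> f + upsum P \<nu> g"
    unfolding upsum_def sum.distrib[symmetric]
  proof (rule sum_mono)
    fix B assume B: "B \<in> P"
    have "(SUP x\<in>B. f x + g x) \<le> (SUP x\<in>B. f x) + (SUP x\<in>B. g x)"
    proof (rule cSUP_least)
      show "B \<noteq> {}" using part_props[OF P(1) B] by auto
      fix x assume "x \<in> B"
      then show "f x + g x \<le> (SUP x\<in>B. f x) + (SUP x\<in>B. g x)"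
        using le_sup[OF assms(4), of B x] le_sup[OF assms(6), of B x] part_props[OF P(1) B] by auto
    qed
    then show "(SUP x\<in>B. f x + g x) * \<nu> B \<le> (SUP x\<in>B. f x) * \<nu> B + (SUP x\<in>B. g x) * \<nu> B"
      using nn[OF B] by (simp add: distrib_right[symmetric] mult_right_mono)
  qed
  have a: "fa_integral M \<nu> (\<lambda>x. f x + g x) \<le> upsum P \<nu> (\<lambda>x. f x + g x)"
    "lowsum P \<nu> (\<lambda>x. f x + g x) \<le> fa_integral M \<nu> (\<lambda>x. f x + g x)"
    using fa_int_le_upsum[OF assms(1,2) bfg P(1)] lowsum_le_fa_int[OF assms(1,2) bfg P(1)] by auto
  have b: "fa_integral M \<nu> f \<le> upsum P \<nu> f" "lowsum P \<nu> f \<le> fa_integral M \<nu> f"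
    "fa_integral M \<nu> g \<le> upsum P \<nu> g" "lowsum P \<nu> g \<le> fa_integral M \<nu> g"
    using fa_int_le_upsum[OF assms(1,2,4) P(1)] lowsum_le_fa_int[OF assms(1,2,4) P(1)]
      fa_int_le_upsum[OF assms(1,2,6) P(1)] lowsum_le_fa_int[OF assms(1,2,6) P(1)] by auto
  have c: "upsum P \<nu> f \<le> lowsum P \<nu> f + \<delta> * \<nu> (space M)" "upsum P \<nu> g \<le> lowsum P \<nu> g + \<delta> * \<nu> (space M)"
    using upsum_le_lowsum[OF assms(1,2,4) P(1,2)] upsum_le_lowsum[OF assms(1,2,6) P(1,3)] by auto
  show "\<bar>fa_integral M \<nu> (\<lambda>x. f x + g x) - (fa_integral M \<nu> f + fa_integral M \<nu> g)\<bar> \<le> \<delta> * (2 * \<nu> (space M))"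
    using a b c l u by (simp add: abs_le_iff algebra_simps)
qed

lemma fa_int_cong:
  assumes "\<And>x. x \<in> space M \<Longrightarrow> f x = g x"
  shows "fa_integral M \<nu> f = fa_integral M \<nu> g"
  unfolding fa_integral_def
proof (rule SUP_cong[OF refl])
  fix P assume P: "P \<in> fa_partitions M"
  show "(\<Sum>B\<in>P. (INF x\<in>B. f x) * \<nu> B) = (\<Sum>B\<in>P. (INF x\<in>B. g x) * \<nu> B)"
  proof (rule sum.cong[OF refl])
    fix B assume "B \<in> P"
    then have "B \<subseteq> space M" using part_props[OF P] by auto
    then have "(INF x\<in>B. f x) = (INF x\<in>B. g x)" using assms by (intro INF_cong) auto
    then show "(INF x\<in>B. f x) * \<nu> B = (INF x\<in>B. g x) * \<nu> B" by simp
  qed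
qed

lemma fa_int_const:
  assumes "fa_on M \<nu>"
  shows "fa_integral M \<nu> (\<lambda>_. c) = c * \<nu> (space M)"
proof -
  have "(\<Sum>B\<in>P. (INF x\<in>B. c) * \<nu> B) = c * \<nu> (space M)" if P: "P \<in> fa_partitions M" for P
  proof -
    have "(\<Sum>B\<in>P. (INF x\<in>B. c) * \<nu> B) = (\<Sum>B\<in>P. c * \<nu> B)"
      using part_props(1)[OF P] by (intro sum.cong) auto
    also have "\<dots> = c * \<nu> (space M)" using partition_total[OF assms P] by (simp add: sum_distrib_left)
    finally show ?thesis .
  qed
  then have "(\<lambda>P. \<Sum>B\<in>P. (INF x\<in>B. c) * \<nu> B) ` fa_partitions M = {c * \<nu> (space M)}"
    using part_nonempty by auto
  then show ?thesis unfolding fa_integral_def by simp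
qed

lemma fa_int_bounds:
  assumes "fa_on M \<nu>" "pos_on M \<nu>" "\<And>x. x \<in> space M \<Longrightarrow> 0 \<le> f x" "\<And>x. x \<in> space M \<Longrightarrow> f x \<le> c"
  shows "0 \<le> fa_integral M \<nu> f" "fa_integral M \<nu> f \<le> c * \<nu> (space M)"
proof -
  have bf: "bnd M f" unfolding bnd_def using assms(3,4) by (intro exI[of _ c]) force
  obtain P where P: "P \<in> fa_partitions M" using part_nonempty by blast
  have nn: "0 \<le> \<nu> B" if "B \<in> P" for B
    using assms(2) part_props(2)[OF P that] by (simp add: pos_on_def)
  have "0 \<le> lowsum P \<nu> f" unfolding lowsum_def
  proof (intro sum_nonneg mult_nonneg_nonneg nn)
    fix B assume B: "B \<in> P"
    show "0 \<le> (INF x\<in>B. f x)" using part_props[OF P B] assms(3) by (intro cINF_greatest) auto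
  qed
  then show "0 \<le> fa_integral M \<nu> f" using lowsum_le_fa_int[OF assms(1,2) bf P] by linarith
  have "upsum P \<nu> f \<le> (\<Sum>B\<in>P. c * \<nu> B)" unfolding upsum_def
  proof (intro sum_mono mult_right_mono nn)
    fix B assume B: "B \<in> P"
    show "(SUP x\<in>B. f x) \<le> c" using part_props[OF P B] assms(4) by (intro cSUP_least) auto
  qed auto
  also have "\<dots> = c * \<nu> (space M)" using partition_total[OF assms(1) P] by (simp add: sum_distrib_left)
  finally show "fa_integral M \<nu> f \<le> c * \<nu> (space M)" using fa_int_le_upsum[OF assms(1,2) bf P] by linarith
qed

lemma fa_int_indicator:
  assumes "fa_on M \<nu>" "pos_on M \<nu>" "H \<in> sets M"
  shows "fa_integral M \<nu> (indicator H) = \<nu> H"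
proof (rule squeeze_eq[of "\<nu> (space M)"])
  show "0 \<le> \<nu> (space M)" using assms(2) by (simp add: pos_on_def)
  have m: "indicator H \<in> borel_measurable M" using assms(3) by simp
  have b: "bnd M (indicator H)" unfolding bnd_def by (intro exI[of _ 1]) (auto simp: indicator_def)
  fix \<delta> :: real assume d: "\<delta> > 0"
  obtain P where P: "P \<in> fa_partitions M" "fine_for P (indicator H) (min \<delta> 1)"
    using fine_exists[OF m b, of "min \<delta> 1"] d by auto
  have fineP: "fine_for P (indicator H) \<delta>" using P(2) unfolding fine_for_def by force
  have "lowsum P \<nu> (indicator H) = (\<Sum>B\<in>P. \<nu> (H \<inter> B))" unfolding lowsum_def
  proof (rule sum.cong[OF refl])
    fix B assume B: "B \<in> P"
    have Bne: "B \<noteq> {}" using part_props[OF P(1) B] by auto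
    have "B \<subseteq> H \<or> B \<inter> H = {}"
    proof (rule ccontr)
      assume "\<not> (B \<subseteq> H \<or> B \<inter> H = {})"
      then obtain x y where "x \<in> B" "x \<notin> H" "y \<in> B" "y \<in> H" by blast
      then have "\<bar>indicator H y - indicator H x\<bar> < (min \<delta> 1 :: real)" using P(2) B unfolding fine_for_def by blast
      then show False using \<open>x \<notin> H\<close> \<open>y \<in> H\<close> by simp
    qed
    then show "(INF x\<in>B. indicator H x) * \<nu> B = \<nu> (H \<inter> B)"
    proof
      assume "B \<subseteq> H"
      then have "(INF x\<in>B. indicator H x :: real) = (INF x\<in>B. 1)" by (intro INF_cong) auto
      then show ?thesis using Bne \<open>B \<subseteq> H\<close> by (simp add: Int_absorb1)
    next
      assume "B \<inter> H = {}"
      then have "(INF x\<in>B. indicator H x :: real) = (INF x\<in>B. 0)" by (intro INF_cong) (auto simp: indicator_def disjoint_iff)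
      then show ?thesis using Bne \<open>B \<inter> H = {}\<close> assms(1) by (simp add: fa_on_def Int_commute)
    qed
  qed
  also have "\<dots> = \<nu> H" using partition_sum[OF assms(1) P(1) assms(3)] by simp
  finally have "lowsum P \<nu> (indicator H) = \<nu> H" .
  then show "\<bar>fa_integral M \<nu> (indicator H) - \<nu> H\<bar> \<le> \<delta> * \<nu> (space M)"
    using fa_int_approx[OF assms(1,2) b P(1) fineP] by (simp add: abs_le_iff)
qed

lemma fa_int_mono:
  assumes "fa_on M \<nu>" "pos_on M \<nu>" "f \<in> borel_measurable M" "bnd M f" "g \<in> borel_measurable M" "bnd M g"
    "\<And>x. x \<in> space M \<Longrightarrow> f x \<le> g x"
  shows "fa_integral M \<nu> f \<le> fa_integral M \<nu> g"
proof -
  obtain c where c: "\<forall>x\<in>space M. \<bar>g x - f x\<bar> \<le> c"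
    using bnd_add[OF assms(6), of "\<lambda>x. - f x"] assms(4) by (auto simp: bnd_def)
  have m: "(\<lambda>x. g x - f x) \<in> borel_measurable M" using assms(3,5) by simp
  have bd: "bnd M (\<lambda>x. g x - f x)" using c by (auto simp: bnd_def)
  have "fa_integral M \<nu> g = fa_integral M \<nu> (\<lambda>x. f x + (g x - f x))" by simp
  also have "\<dots> = fa_integral M \<nu> f + fa_integral M \<nu> (\<lambda>x. g x - f x)"
    by (rule fa_int_add[OF assms(1-4) m bd])
  finally show ?thesis using fa_int_bounds(1)[OF assms(1,2), of "\<lambda>x. g x - f x"] assms(7) c by force
qed


lemma tf_props:
  assumes "transition_function M p" "x \<in> space M"
  shows "countably_additive_on M (p x)" "fa_on M (p x)" "pos_on M (p x)"
    "\<And>E. E \<in> sets M \<Longrightarrow> p x E \<le> 1" "p x (space M) = 1"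
proof -
  show c: "countably_additive_on M (p x)" using assms unfolding transition_function_def by auto
  show "fa_on M (p x)" by (rule ca_imp_fa[OF c])
  show "pos_on M (p x)" "\<And>E. E \<in> sets M \<Longrightarrow> p x E \<le> 1" "p x (space M) = 1"
    using assms unfolding transition_function_def pos_on_def by auto
qed

lemma tf_meas:
  assumes "transition_function M p" "E \<in> sets M"
  shows "(\<lambda>x. p x E) \<in> borel_measurable M" "bnd M (\<lambda>x. p x E)"
    "\<And>x. x \<in> space M \<Longrightarrow> 0 \<le> p x E" "\<And>x. x \<in> space M \<Longrightarrow> p x E \<le> 1"
proof -
  show "(\<lambda>x. p x E) \<in> borel_measurable M" using assms unfolding transition_function_def by auto
  show "\<And>x. x \<in> space M \<Longrightarrow> 0 \<le> p x E" "\<And>x. x \<in> space M \<Longrightarrow> p x E \<le> 1"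
    using assms unfolding transition_function_def by auto
  then show "bnd M (\<lambda>x. p x E)" unfolding bnd_def by (intro exI[of _ 1]) auto
qed

lemma S_ba_props:
  assumes "\<nu> \<in> S_ba M"
  shows "fa_on M \<nu>" "pos_on M \<nu>" "\<nu> (space M) = 1" "\<And>E. E \<notin> sets M \<Longrightarrow> \<nu> E = 0"
    "\<And>E. E \<in> sets M \<Longrightarrow> \<nu> E \<le> 1" "\<And>E. 0 \<le> \<nu> E"
proof -
  show f: "fa_on M \<nu>" and p: "pos_on M \<nu>" using assms by (auto simp: S_ba_def ba_def fa_on_def pos_on_def)
  show o: "\<nu> (space M) = 1" and z: "\<And>E. E \<notin> sets M \<Longrightarrow> \<nu> E = 0" using assms by (auto simp: S_ba_def ba_def)
  show "\<And>E. E \<in> sets M \<Longrightarrow> \<nu> E \<le> 1"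
    using fa_mono[OF f p _ sets.top] o sets.sets_into_space by metis
  show "\<And>E. 0 \<le> \<nu> E" using p z unfolding pos_on_def by (metis order_refl)
qed

lemma S_baI:
  assumes "fa_on M \<nu>" "pos_on M \<nu>" "\<nu> (space M) = 1" "\<And>E. E \<notin> sets M \<Longrightarrow> \<nu> E = 0"
  shows "\<nu> \<in> S_ba M"
proof -
  have "\<bar>\<nu> E\<bar> \<le> 1" if "E \<in> sets M" for E
    using fa_mono[OF assms(1,2) that sets.top] assms(2,3) sets.sets_into_space[OF that] that
    unfolding pos_on_def by auto
  then show ?thesis using assms unfolding S_ba_def ba_def fa_on_def pos_on_def by auto
qed

lemma markov_S_ba:
  assumes tf: "transition_function M p" and nu: "\<nu> \<in> S_ba M"
  shows "markov_op M p \<nu> \<in> S_ba M"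
proof -
  note nf = S_ba_props(1)[OF nu] and np = S_ba_props(2)[OF nu] and n1 = S_ba_props(3)[OF nu]
  define A where "A = markov_op M p \<nu>"
  have AE: "A E = fa_integral M \<nu> (\<lambda>x. p x E)" if "E \<in> sets M" for E
    using that by (simp add: A_def markov_op_def)
  have fa: "fa_on M A" unfolding fa_on_def
  proof (intro conjI ballI impI)
    have "A {} = fa_integral M \<nu> (\<lambda>_. 0)"
    proof -
      have "fa_integral M \<nu> (\<lambda>x. p x {}) = fa_integral M \<nu> (\<lambda>_. 0)"
        by (rule fa_int_cong) (use tf_props(2)[OF tf] in \<open>auto simp: fa_on_def\<close>)
      then show ?thesis using AE[of "{}"] by simp
    qed
    then show "A {} = 0" using fa_int_const[OF nf, of 0] by simp
    fix E F assume EF: "E \<in> sets M" "F \<in> sets M" "E \<inter> F = {}"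
    have "fa_integral M \<nu> (\<lambda>x. p x (E \<union> F)) = fa_integral M \<nu> (\<lambda>x. p x E + p x F)"
      by (rule fa_int_cong) (use tf_props(2)[OF tf] EF in \<open>auto simp: fa_on_def\<close>)
    then have "A (E \<union> F) = fa_integral M \<nu> (\<lambda>x. p x E + p x F)"
      using AE[of "E \<union> F"] EF by simp
    also have "\<dots> = A E + A F"
      using fa_int_add[OF nf np tf_meas(1,2)[OF tf EF(1)] tf_meas(1,2)[OF tf EF(2)]] AE EF by simp
    finally show "A (E \<union> F) = A E + A F" .
  qed
  have pos: "pos_on M A" unfolding pos_on_def
  proof
    fix E assume E: "E \<in> sets M"
    show "0 \<le> A E" using AE[OF E] fa_int_bounds(1)[OF nf np tf_meas(3)[OF tf E] tf_meas(4)[OF tf E]] by simp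
  qed
  have one: "A (space M) = 1"
  proof -
    have "fa_integral M \<nu> (\<lambda>x. p x (space M)) = fa_integral M \<nu> (\<lambda>_. 1)"
      by (rule fa_int_cong) (use tf_props(5)[OF tf] in auto)
    then have "A (space M) = fa_integral M \<nu> (\<lambda>_. 1)" using AE[of "space M"] by simp
    then show ?thesis using fa_int_const[OF nf, of 1] n1 by simp
  qed
  have "A E = 0" if "E \<notin> sets M" for E using that by (simp add: A_def markov_op_def)
  then show ?thesis using S_baI[OF fa pos one] unfolding A_def by blast
qed

lemma markov_ca:
  assumes tf: "transition_function M p" and nu: "\<nu> \<in> S_ba M" and ca: "countably_additive_on M \<nu>"
  shows "countably_additive_on M (markov_op M p \<nu>)"
proof -
  note nf = S_ba_props(1)[OF nu] and np = S_ba_props(2)[OF nu] and n1 = S_ba_props(3)[OF nu]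
  define A where "A = markov_op M p \<nu>"
  have AE: "A E = fa_integral M \<nu> (\<lambda>x. p x E)" if "E \<in> sets M" for E
    using that by (simp add: A_def markov_op_def)
  have AS: "A \<in> S_ba M" unfolding A_def by (rule markov_S_ba[OF tf nu])
  show ?thesis unfolding A_def[symmetric]
  proof (rule cont_imp_ca[OF S_ba_props(1)[OF AS]])
    fix G assume G: "\<And>n. G n \<in> sets M" "decseq G" "(\<Inter>n. G n) = {}"
    show "(\<lambda>n. A (G n)) \<longlonglongrightarrow> 0"
    proof (rule LIMSEQ_I)
      fix e :: real assume e: "e > 0"
      define \<eta> where "\<eta> = e / 2"
      have \<eta>: "\<eta> > 0" using e by (simp add: \<eta>_def)
      define H where "H n = {y\<in>space M. \<eta> < p y (G n)}" for n
      have Hm: "H n \<in> sets M" for n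
        using tf_meas(1)[OF tf G(1)] unfolding H_def by measurable
      have Hd: "decseq H"
      proof (rule decseq_SucI)
        fix n
        have "p y (G (Suc n)) \<le> p y (G n)" if "y \<in> space M" for y
          using fa_mono[OF tf_props(2,3)[OF tf that] G(1) G(1)] decseqD[OF G(2), of n "Suc n"] by simp
        then show "H (Suc n) \<subseteq> H n" unfolding H_def by force
      qed
      have He: "(\<Inter>n. H n) = {}"
      proof (rule ccontr)
        assume "(\<Inter>n. H n) \<noteq> {}"
        then obtain y where y: "\<And>n. y \<in> H n" by blast
        then have ys: "y \<in> space M" unfolding H_def by auto
        have "(\<lambda>n. p y (G n)) \<longlonglongrightarrow> 0" by (rule ca_cont[OF tf_props(1)[OF tf ys] G])
        then obtain N where "\<And>n. n \<ge> N \<Longrightarrow> norm (p y (G n) - 0) < \<eta>"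
          using LIMSEQ_D[OF _ \<eta>] by blast
        then have "p y (G N) < \<eta>" by force
        with y[of N] show False unfolding H_def by auto
      qed
      have "(\<lambda>n. \<nu> (H n)) \<longlonglongrightarrow> 0" by (rule ca_cont[OF ca Hm Hd He])
      then obtain N where N: "\<And>n. n \<ge> N \<Longrightarrow> norm (\<nu> (H n) - 0) < \<eta>"
        using LIMSEQ_D[OF _ \<eta>] by blast
      show "\<exists>N. \<forall>n\<ge>N. norm (A (G n) - 0) < e"
      proof (intro exI allI impI)
        fix n assume n: "n \<ge> N"
        have m2: "(\<lambda>y. \<eta> + indicator (H n) y) \<in> borel_measurable M" using Hm[of n] by simp
        have b2: "bnd M (\<lambda>y. \<eta> + indicator (H n) y)" unfolding bnd_def
          by (intro exI[of _ "\<eta> + 1"]) (use \<eta> in \<open>auto simp: indicator_def\<close>)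
        have le: "p y (G n) \<le> \<eta> + indicator (H n) y" if "y \<in> space M" for y
        proof (cases "y \<in> H n")
          case True then show ?thesis using tf_meas(4)[OF tf G(1)[of n] that] \<eta> by simp
        next
          case False then show ?thesis using that unfolding H_def by auto
        qed
        have "A (G n) \<le> fa_integral M \<nu> (\<lambda>y. \<eta> + indicator (H n) y)"
          using AE[OF G(1)] fa_int_mono[OF nf np tf_meas(1,2)[OF tf G(1)] m2 b2 le] by simp
        also have "\<dots> = fa_integral M \<nu> (\<lambda>_. \<eta>) + fa_integral M \<nu> (indicator (H n))"
        proof (rule fa_int_add[OF nf np])
          show "bnd M (\<lambda>_. \<eta>)" unfolding bnd_def by (intro exI[of _ "\<bar>\<eta>\<bar>"]) auto
          show "bnd M (indicator (H n))" unfolding bnd_def by (intro exI[of _ 1]) (auto simp: indicator_def)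
        qed (use Hm[of n] in auto)
        also have "\<dots> = \<eta> + \<nu> (H n)" using fa_int_const[OF nf] fa_int_indicator[OF nf np Hm] n1 by simp
        finally have "A (G n) \<le> \<eta> + \<nu> (H n)" .
        moreover have "0 \<le> A (G n)" using S_ba_props(6)[OF AS] .
        moreover have "\<nu> (H n) < \<eta>" using N[OF n] S_ba_props(6)[OF nu, of "H n"] by simp
        ultimately show "norm (A (G n) - 0) < e" unfolding \<eta>_def by simp
      qed
    qed
  qed
qed

definition dirac_on :: "'a measure \<Rightarrow> 'a \<Rightarrow> 'a set \<Rightarrow> real" where
  "dirac_on M x = (\<lambda>E. if E \<in> sets M then indicator E x else 0)"

lemma dirac_S_ba:
  assumes "x \<in> space M"
  shows "dirac_on M x \<in> S_ba M" "countably_additive_on M (dirac_on M x)"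
proof -
  show S: "dirac_on M x \<in> S_ba M"
    by (rule S_baI) (use assms in \<open>auto simp: dirac_on_def fa_on_def pos_on_def indicator_def\<close>)
  show "countably_additive_on M (dirac_on M x)" unfolding countably_additive_on_def
  proof (intro allI impI)
    fix F :: "nat \<Rightarrow> 'a set" assume F: "range F \<subseteq> sets M" "disjoint_family F"
    have U: "(\<Union>n. F n) \<in> sets M" using F(1) by auto
    show "(\<lambda>n. dirac_on M x (F n)) sums dirac_on M x (\<Union>n. F n)"
    proof (cases "x \<in> (\<Union>n. F n)")
      case True
      then obtain j where j: "x \<in> F j" by auto
      have "dirac_on M x (F n) = (if n = j then 1 else 0)" for n
      proof (cases "n = j")
        case False
        then have "x \<notin> F n" using F(2) j unfolding disjoint_family_on_def by blast
        then show ?thesis using F(1) False by (auto simp: dirac_on_def)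
      qed (use F(1) j in \<open>auto simp: dirac_on_def\<close>)
      moreover have "dirac_on M x (\<Union>n. F n) = 1" using True U by (simp add: dirac_on_def)
      ultimately show ?thesis using sums_single[of j "\<lambda>_. 1::real"] by simp
    next
      case False
      then have "dirac_on M x (F n) = 0" for n using F(1) by (auto simp: dirac_on_def)
      moreover have "dirac_on M x (\<Union>n. F n) = 0" using False U by (simp add: dirac_on_def)
      ultimately show ?thesis by simp
    qed
  qed
qed


lemma nikodym:
  fixes \<nu> :: "nat \<Rightarrow> 'a set \<Rightarrow> real" and \<mu> :: "'a set \<Rightarrow> real"
  assumes nuS: "\<And>n. \<nu> n \<in> S_ba M" and nuca: "\<And>n. countably_additive_on M (\<nu> n)"
    and mu: "\<mu> \<in> S_ba M"
    and conv: "\<And>E. E \<in> sets M \<Longrightarrow> (\<lambda>n. \<nu> n E) \<longlonglongrightarrow> \<mu> E"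
  shows "countably_additive_on M \<mu>"
proof (rule cont_imp_ca[OF S_ba_props(1)[OF mu]])
  note mf = S_ba_props(1)[OF mu] and mp = S_ba_props(2)[OF mu]
  note nf = S_ba_props(1)[OF nuS] and np = S_ba_props(2)[OF nuS]
  fix G assume G: "\<And>n. G n \<in> sets M" "decseq G" "(\<Inter>n. G n) = {}"
  show "(\<lambda>n. \<mu> (G n)) \<longlonglongrightarrow> 0"
  proof (rule LIMSEQ_I)
    fix \<epsilon> :: real assume \<epsilon>: "\<epsilon> > 0"
    show "\<exists>N. \<forall>n\<ge>N. norm (\<mu> (G n) - 0) < \<epsilon>"
    proof (rule ccontr)
      assume neg: "\<not> (\<exists>N. \<forall>n\<ge>N. norm (\<mu> (G n) - 0) < \<epsilon>)"
      have big: "\<mu> (G N) \<ge> \<epsilon>" for N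
      proof -
        obtain n where n: "n \<ge> N" "\<not> norm (\<mu> (G n) - 0) < \<epsilon>" using neg by blast
        have "\<mu> (G n) \<le> \<mu> (G N)" using fa_mono[OF mf mp G(1) G(1) decseqD[OF G(2) n(1)]] .
        moreover have "0 \<le> \<mu> (G n)" using S_ba_props(6)[OF mu] .
        ultimately show ?thesis using n(2) by simp
      qed
      define \<delta> where "\<delta> = \<epsilon> / 8"
      have \<delta>: "\<delta> > 0" using \<epsilon> by (simp add: \<delta>_def)
      define P where "P k x \<longleftrightarrow> snd x \<in> sets M \<and> snd x \<inter> G (fst x) = {} \<and> k \<le> fst x" for k :: nat and x :: "nat \<times> 'a set"
      define Q where "Q k x y \<longleftrightarrow> (\<exists>n. k \<le> n \<and> \<nu> n (G (fst x)) > \<epsilon> - \<delta> \<and> \<bar>\<nu> n (snd x) - \<mu> (snd x)\<bar> < \<delta>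
           \<and> \<nu> n (G (fst y)) < \<delta>) \<and> fst x < fst y
           \<and> snd y = (if even k then snd x \<union> (G (fst x) - G (fst y)) else snd x)"
        for k :: nat and x y :: "nat \<times> 'a set"
      have "\<exists>f. \<forall>k. P k (f k) \<and> Q k (f k) (f (Suc k))"
      proof (rule dependent_nat_choice)
        show "\<exists>x. P 0 x" by (rule exI[of _ "(0, {})"]) (simp add: P_def)
        fix x k assume Px: "P k x"
        obtain N C where x: "x = (N, C)" by (cases x)
        have C: "C \<in> sets M" "C \<inter> G N = {}" "k \<le> N" using Px by (auto simp: P_def x)
        obtain n0 where n0: "\<And>n. n \<ge> n0 \<Longrightarrow> norm (\<nu> n (G N) - \<mu> (G N)) < \<delta>"
          using LIMSEQ_D[OF conv[OF G(1)] \<delta>] by blast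
        obtain n1 where n1: "\<And>n. n \<ge> n1 \<Longrightarrow> norm (\<nu> n C - \<mu> C) < \<delta>"
          using LIMSEQ_D[OF conv[OF C(1)] \<delta>] by blast
        define n where "n = max k (max n0 n1)"
        have nge: "n0 \<le> n" "n1 \<le> n" "k \<le> n" by (simp_all add: n_def)
        have nG: "\<nu> n (G N) > \<epsilon> - \<delta>" using n0[OF nge(1)] big[of N] by (simp add: abs_less_iff)
        have nC: "\<bar>\<nu> n C - \<mu> C\<bar> < \<delta>" using n1[OF nge(2)] by simp
        obtain m0 where m0: "\<And>m. m \<ge> m0 \<Longrightarrow> norm (\<nu> n (G m) - 0) < \<delta>"
          using LIMSEQ_D[OF ca_cont[OF nuca G] \<delta>] by blast
        define N' where "N' = max m0 (Suc N)"
        have "m0 \<le> N'" by (simp add: N'_def)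
        then have nN': "\<nu> n (G N') < \<delta>" using m0[of N'] by (simp add: abs_less_iff)
        define C' where "C' = (if even k then C \<union> (G N - G N') else C)"
        have sub: "G N' \<subseteq> G N" using decseqD[OF G(2), of N N'] by (simp add: N'_def)
        have "P (Suc k) (N', C')"
          unfolding P_def using C sub G(1) by (auto simp: C'_def N'_def)
        moreover have "Q k x (N', C')"
          unfolding Q_def x using nG nC nN' nge(3) by (auto simp: C'_def N'_def intro!: exI[of _ n])
        ultimately show "\<exists>y. P (Suc k) y \<and> Q k x y" by blast
      qed
      then obtain f where f: "\<And>k. P k (f k)" "\<And>k. Q k (f k) (f (Suc k))" by blast
      define Nk where "Nk k = fst (f k)" for k
      define Ck where "Ck k = snd (f k)" for k
      have "\<forall>k. \<exists>n. k \<le> n \<and> \<nu> n (G (Nk k)) > \<epsilon> - \<delta> \<and> \<bar>\<nu> n (Ck k) - \<mu> (Ck k)\<bar> < \<delta>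
           \<and> \<nu> n (G (Nk (Suc k))) < \<delta>"
        using f(2) unfolding Q_def Nk_def Ck_def by blast
      then obtain nn where nn: "\<And>k. k \<le> nn k" "\<And>k. \<nu> (nn k) (G (Nk k)) > \<epsilon> - \<delta>"
        "\<And>k. \<bar>\<nu> (nn k) (Ck k) - \<mu> (Ck k)\<bar> < \<delta>" "\<And>k. \<nu> (nn k) (G (Nk (Suc k))) < \<delta>"
        by metis
      have Nmono: "Nk k < Nk (Suc k)" for k using f(2)[of k] unfolding Q_def Nk_def by blast
      have Cstep: "Ck (Suc k) = (if even k then Ck k \<union> (G (Nk k) - G (Nk (Suc k))) else Ck k)" for k
        using f(2)[of k] unfolding Q_def Nk_def Ck_def by blast
      have Cm: "Ck k \<in> sets M" "Ck k \<inter> G (Nk k) = {}" for k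
        using f(1)[of k] unfolding P_def Nk_def Ck_def by auto
      have Nle: "Nk k \<le> Nk j" if "k \<le> j" for k j
        using that by (induction j rule: dec_induct) (auto intro: order_trans less_imp_le Nmono)
      have Gsub: "G (Nk j) \<subseteq> G (Nk k)" if "k \<le> j" for k j
        using decseqD[OF G(2) Nle[OF that]] .
      have Cinc: "Ck k \<subseteq> Ck (Suc k)" for k using Cstep[of k] by auto
      have Cle: "Ck k \<subseteq> Ck j" if "k \<le> j" for k j
        using that by (induction j rule: dec_induct) (use Cinc in blast)+
      have Cbound: "Ck (k + d) \<subseteq> Ck k \<union> G (Nk k)" for k d
      proof (induction d)
        case 0 then show ?case by simp
      next
        case (Suc d)
        have "Ck (Suc (k + d)) \<subseteq> Ck (k + d) \<union> G (Nk (k + d))" using Cstep[of "k + d"] by auto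
        also have "\<dots> \<subseteq> Ck k \<union> G (Nk k)" using Suc.IH Gsub[of k "k + d"] by auto
        finally show ?case by simp
      qed
      define U where "U = (\<Union>k. Ck k)"
      have Um: "U \<in> sets M" unfolding U_def using Cm(1) by auto
      have CU: "Ck k \<subseteq> U" for k unfolding U_def by auto
      have UC: "U - Ck k \<subseteq> G (Nk k)" for k
      proof
        fix x assume x: "x \<in> U - Ck k"
        then obtain j where j: "x \<in> Ck j" unfolding U_def by auto
        show "x \<in> G (Nk k)"
        proof (cases "j \<le> k")
          case True then show ?thesis using Cle[OF True] j x by auto
        next
          case False
          then obtain d where "j = k + d" by (metis le_add_diff_inverse nat_le_linear)
          then show ?thesis using Cbound[of k d] j x by auto
        qed
      qed
      have odd_bound: "\<nu> (nn k) U < \<mu> (Ck k) + 2 * \<delta>" if "odd k" for k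
      proof -
        have e: "Ck (Suc k) = Ck k" using Cstep[of k] that by simp
        have "U - Ck k \<subseteq> G (Nk (Suc k))" using UC[of "Suc k"] e by simp
        then have "\<nu> (nn k) (U - Ck k) \<le> \<nu> (nn k) (G (Nk (Suc k)))"
          using fa_mono[OF nf np _ G(1)] Um Cm(1) by blast
        moreover have "\<nu> (nn k) (U - Ck k) = \<nu> (nn k) U - \<nu> (nn k) (Ck k)"
          using fa_diff[OF nf Cm(1) Um CU] .
        ultimately show ?thesis using nn(3)[of k] nn(4)[of k] by linarith
      qed
      have even_bound: "\<nu> (nn k) U > \<mu> (Ck k) + \<epsilon> - 3 * \<delta>" if "even k" for k
      proof -
        have e: "Ck (Suc k) = Ck k \<union> (G (Nk k) - G (Nk (Suc k)))" using Cstep[of k] that by simp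
        have d: "Ck k \<inter> (G (Nk k) - G (Nk (Suc k))) = {}" using Cm(2)[of k] by auto
        have s: "G (Nk (Suc k)) \<subseteq> G (Nk k)" using Gsub[of k "Suc k"] by simp
        have "\<nu> (nn k) (Ck (Suc k)) = \<nu> (nn k) (Ck k) + \<nu> (nn k) (G (Nk k) - G (Nk (Suc k)))"
          unfolding e by (rule fa_Un[OF nf Cm(1)]) (use G(1) d in auto)
        also have "\<nu> (nn k) (G (Nk k) - G (Nk (Suc k))) = \<nu> (nn k) (G (Nk k)) - \<nu> (nn k) (G (Nk (Suc k)))"
          by (rule fa_diff[OF nf G(1) G(1) s])
        finally have "\<nu> (nn k) (Ck (Suc k)) = \<nu> (nn k) (Ck k) + (\<nu> (nn k) (G (Nk k)) - \<nu> (nn k) (G (Nk (Suc k))))" .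
        moreover have "\<nu> (nn k) (Ck (Suc k)) \<le> \<nu> (nn k) U" using fa_mono[OF nf np Cm(1) Um CU] .
        ultimately show ?thesis using nn(2)[of k] nn(3)[of k] nn(4)[of k] by linarith
      qed
      obtain K where K: "\<And>n. n \<ge> K \<Longrightarrow> norm (\<nu> n U - \<mu> U) < \<delta>"
        using LIMSEQ_D[OF conv[OF Um] \<delta>] by blast
      define k where "k = 2 * K + 1"
      define j where "j = 2 * K + 2"
      have "K \<le> nn k" using nn(1)[of k] by (simp add: k_def)
      then have a: "\<mu> U < \<nu> (nn k) U + \<delta>" using K by fastforce
      have "K \<le> nn j" using nn(1)[of j] by (simp add: j_def)
      then have b: "\<mu> U > \<nu> (nn j) U - \<delta>" using K by fastforce
      have c: "\<nu> (nn k) U < \<mu> (Ck k) + 2 * \<delta>" by (rule odd_bound) (simp add: k_def)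
      have d: "\<nu> (nn j) U > \<mu> (Ck j) + \<epsilon> - 3 * \<delta>" by (rule even_bound) (simp add: j_def)
      have "\<mu> (Ck k) \<le> \<mu> (Ck j)" using fa_mono[OF mf mp Cm(1) Cm(1) Cle] by (simp add: k_def j_def)
      then show False using a b c d \<epsilon> unfolding \<delta>_def by linarith
    qed
  qed
qed


lemma box_compact: "compact (PiE UNIV (\<lambda>_::'b. {0..1::real}))"
proof -
  have "compactin (product_topology (\<lambda>_::'b. euclidean) UNIV) (PiE UNIV (\<lambda>_. {0..1::real}))"
    by (simp add: compactin_PiE)
  then show ?thesis by (simp add: euclidean_product_topology)
qed

lemma closure_near:
  fixes g :: "'b \<Rightarrow> real"
  assumes "g \<in> closure S" "finite Es" "\<delta> > 0"
  shows "\<exists>h\<in>S. \<forall>E\<in>Es. \<bar>h E - g E\<bar> < \<delta>"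
proof -
  define Ov where "Ov = {h::'b \<Rightarrow> real. \<forall>E\<in>Es. h (id E) \<in> ball (g E) \<delta>}"
  have "open Ov" unfolding Ov_def by (rule product_topology_basis'[OF assms(2)]) auto
  moreover have "g \<in> Ov" using assms(3) by (simp add: Ov_def)
  ultimately have "Ov \<inter> S \<noteq> {}" using assms(1) open_Int_closure_eq_empty by blast
  then obtain h where "h \<in> Ov" "h \<in> S" by blast
  then show ?thesis by (intro bexI[of _ h]) (auto simp: Ov_def dist_real_def abs_minus_commute)
qed

lemma cluster_point:
  fixes \<nu> :: "nat \<Rightarrow> 'b \<Rightarrow> real"
  assumes box: "\<And>n E. \<nu> n E \<in> {0..1}" and inf: "\<And>N. \<exists>n\<in>I. n \<ge> N"
  shows "\<exists>g. (\<forall>E. g E \<in> {0..1}) \<and> (\<forall>Es \<delta> N. finite Es \<longrightarrow> \<delta> > 0 \<longrightarrow>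
            (\<exists>n\<in>I. n \<ge> N \<and> (\<forall>E\<in>Es. \<bar>\<nu> n E - g E\<bar> < \<delta>)))"
proof -
  define K where "K = PiE UNIV (\<lambda>_::'b. {0..1::real})"
  define T where "T N = \<nu> ` {n\<in>I. N \<le> n}" for N
  have "K \<inter> (\<Inter>N\<in>UNIV. closure (T N)) \<noteq> {}"
  proof (rule compact_imp_fip_image)
    show "compact K" unfolding K_def by (rule box_compact)
    show "closed (closure (T N))" for N by simp
    fix I' :: "nat set" assume I': "finite I'"
    obtain n where n: "n \<in> I" "n \<ge> Max (insert 0 I')" using inf by blast
    have "\<nu> n \<in> K" using box unfolding K_def by auto
    moreover have "\<nu> n \<in> closure (T N)" if "N \<in> I'" for N
    proof -
      have "N \<le> Max (insert 0 I')" using I' that by simp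
      then have "\<nu> n \<in> T N" using n unfolding T_def by auto
      then show ?thesis using closure_subset by blast
    qed
    ultimately show "K \<inter> (\<Inter>N\<in>I'. closure (T N)) \<noteq> {}" by blast
  qed
  then obtain g where g: "g \<in> K" "\<And>N. g \<in> closure (T N)" by blast
  show ?thesis
  proof (intro exI conjI allI impI)
    show "g E \<in> {0..1}" for E using g(1) unfolding K_def by auto
    fix Es :: "'b set" and \<delta> :: real and N assume "finite Es" "\<delta> > 0"
    then obtain h where "h \<in> T N" "\<forall>E\<in>Es. \<bar>h E - g E\<bar> < \<delta>" using closure_near[OF g(2)[of N]] by blast
    then show "\<exists>n\<in>I. n \<ge> N \<and> (\<forall>E\<in>Es. \<bar>\<nu> n E - g E\<bar> < \<delta>)" unfolding T_def by auto
  qed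
qed


lemma S_ba_box: "\<nu> \<in> S_ba M \<Longrightarrow> \<nu> E \<in> {0..1}"
  using S_ba_props(4-6)[of \<nu> M] by (cases "E \<in> sets M") auto

lemma small_eq0:
  fixes a :: real
  assumes "\<And>\<delta>. \<delta> > 0 \<Longrightarrow> \<bar>a\<bar> < \<delta>"
  shows "a = 0"
  using assms[of "\<bar>a\<bar>"] by force

lemma small_nonneg:
  fixes a :: real
  assumes "\<And>\<delta>. \<delta> > 0 \<Longrightarrow> a > - \<delta>"
  shows "a \<ge> 0"
  using assms[of "- a"] by force

lemma cesaro_conv:
  fixes \<nu> :: "nat \<Rightarrow> 'a set \<Rightarrow> real"
  assumes tf: "transition_function M p" and D: "Delta_ba M p = {\<mu>0}"
    and nuS: "\<And>n. \<nu> n \<in> S_ba M"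
    and inv: "\<And>n F. F \<in> sets M \<Longrightarrow> \<bar>markov_op M p (\<nu> n) F - \<nu> n F\<bar> \<le> 1 / real (Suc n)"
    and E0: "E0 \<in> sets M"
  shows "(\<lambda>n. \<nu> n E0) \<longlonglongrightarrow> \<mu>0 E0"
proof (rule ccontr)
  assume nc: "\<not> (\<lambda>n. \<nu> n E0) \<longlonglongrightarrow> \<mu>0 E0"
  obtain \<epsilon> where \<epsilon>: "\<epsilon> > 0" and inf: "\<And>N. \<exists>n\<ge>N. \<not> norm (\<nu> n E0 - \<mu>0 E0) < \<epsilon>"
    using nc LIMSEQ_I by metis
  define I where "I = {n. \<bar>\<nu> n E0 - \<mu>0 E0\<bar> \<ge> \<epsilon>}"
  have infI: "\<exists>n\<in>I. n \<ge> N" for N using inf[of N] unfolding I_def by force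
  obtain g where gbox: "\<And>E. g E \<in> {0..1}"
    and near: "\<And>Es \<delta> N. finite Es \<Longrightarrow> \<delta> > 0 \<Longrightarrow> \<exists>n\<in>I. n \<ge> N \<and> (\<forall>E\<in>Es. \<bar>\<nu> n E - g E\<bar> < \<delta>)"
    using cluster_point[of \<nu> I, OF S_ba_box[OF nuS] infI] by blast
  note nf = S_ba_props(1)[OF nuS] and np = S_ba_props(2)[OF nuS] and n1 = S_ba_props(3)[OF nuS]
  have near1: "\<exists>n\<in>I. \<bar>\<nu> n E - g E\<bar> < \<delta>" if "\<delta> > 0" for E \<delta>
    using near[of "{E}" \<delta> 0] that by auto
  have g0: "g E = 0" if "E \<notin> sets M" for E
  proof (rule small_eq0)
    fix \<delta> :: real assume "\<delta> > 0"
    then obtain n where "\<bar>\<nu> n E - g E\<bar> < \<delta>" using near1 by blast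
    then show "\<bar>g E\<bar> < \<delta>" using S_ba_props(4)[OF nuS that] by simp
  qed
  have gfa: "fa_on M g" unfolding fa_on_def
  proof (intro conjI ballI impI)
    show "g {} = 0"
    proof (rule small_eq0)
      fix \<delta> :: real assume "\<delta> > 0"
      then obtain n where "\<bar>\<nu> n {} - g {}\<bar> < \<delta>" using near1 by blast
      then show "\<bar>g {}\<bar> < \<delta>" using nf[of n] by (simp add: fa_on_def)
    qed
    fix A B assume AB: "A \<in> sets M" "B \<in> sets M" "A \<inter> B = {}"
    have "g (A \<union> B) - (g A + g B) = 0"
    proof (rule small_eq0)
      fix \<delta> :: real assume d: "\<delta> > 0"
      then obtain n where n: "\<forall>E\<in>{A, B, A \<union> B}. \<bar>\<nu> n E - g E\<bar> < \<delta> / 3"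
        using near[of "{A, B, A \<union> B}" "\<delta> / 3" 0] by auto
      have "\<nu> n (A \<union> B) = \<nu> n A + \<nu> n B" using fa_Un[OF nf AB] .
      moreover have "\<bar>\<nu> n A - g A\<bar> < \<delta> / 3" "\<bar>\<nu> n B - g B\<bar> < \<delta> / 3"
        "\<bar>\<nu> n (A \<union> B) - g (A \<union> B)\<bar> < \<delta> / 3" using n by auto
      ultimately show "\<bar>g (A \<union> B) - (g A + g B)\<bar> < \<delta>" by (simp only: abs_less_iff) linarith
    qed
    then show "g (A \<union> B) = g A + g B" by simp
  qed
  have gpos: "pos_on M g" unfolding pos_on_def using gbox by auto
  have g1: "g (space M) = 1"
  proof -
    have "g (space M) - 1 = 0"
    proof (rule small_eq0)
      fix \<delta> :: real assume "\<delta> > 0"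
      then obtain n where "\<bar>\<nu> n (space M) - g (space M)\<bar> < \<delta>" using near1 by blast
      then show "\<bar>g (space M) - 1\<bar> < \<delta>" using n1[of n] by simp
    qed
    then show ?thesis by simp
  qed
  have gS: "g \<in> S_ba M" by (rule S_baI[OF gfa gpos g1 g0])
  have gE0: "\<bar>g E0 - \<mu>0 E0\<bar> \<ge> \<epsilon>"
  proof (rule ccontr)
    assume "\<not> \<bar>g E0 - \<mu>0 E0\<bar> \<ge> \<epsilon>"
    then have "\<epsilon> - \<bar>g E0 - \<mu>0 E0\<bar> > 0" by simp
    then obtain n where "n \<in> I" "\<bar>\<nu> n E0 - g E0\<bar> < \<epsilon> - \<bar>g E0 - \<mu>0 E0\<bar>" using near1 by blast
    then show False unfolding I_def by simp
  qed
  have ginv: "markov_op M p g = g"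
  proof
    fix F
    show "markov_op M p g F = g F"
    proof (cases "F \<in> sets M")
      case False
      then show ?thesis using g0 by (simp add: markov_op_def)
    next
      case F: True
      note fm = tf_meas[OF tf F]
      have "markov_op M p g F - g F = 0"
      proof (rule small_eq0)
        fix \<delta> :: real assume d: "\<delta> > 0"
        define \<eta> where "\<eta> = \<delta> / 6"
        have \<eta>: "\<eta> > 0" using d by (simp add: \<eta>_def)
        obtain P where P: "P \<in> fa_partitions M" "fine_for P (\<lambda>x. p x F) \<eta>"
          using fine_exists[OF fm(1,2) \<eta>] by blast
        have Pfin: "finite P" using P(1) by (simp add: fa_partitions_def)
        define \<eta>' where "\<eta>' = \<eta> / (real (card P) + 1)"
        have \<eta>': "\<eta>' > 0" "\<eta>' \<le> \<eta>" using \<eta> by (auto simp: \<eta>'_def field_simps)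
        obtain N where N: "1 / real (Suc N) < \<eta>"
          using reals_Archimedean[OF \<eta>] by (metis inverse_eq_divide of_nat_Suc add.commute)
        obtain n where n: "n \<in> I" "n \<ge> N" "\<forall>E\<in>insert F P. \<bar>\<nu> n E - g E\<bar> < \<eta>'"
          using near[of "insert F P" \<eta>' N] Pfin \<eta>' by auto
        have a1: "lowsum P g (\<lambda>x. p x F) \<le> markov_op M p g F"
          "markov_op M p g F \<le> lowsum P g (\<lambda>x. p x F) + \<eta>"
          using fa_int_approx[OF gfa gpos fm(2) P] g1 F by (simp_all add: markov_op_def)
        have a2: "lowsum P (\<nu> n) (\<lambda>x. p x F) \<le> markov_op M p (\<nu> n) F"
          "markov_op M p (\<nu> n) F \<le> lowsum P (\<nu> n) (\<lambda>x. p x F) + \<eta>"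
          using fa_int_approx[OF nf[of n] np[of n] fm(2) P] n1[of n] F by (simp_all add: markov_op_def)
        have a3: "\<bar>lowsum P g (\<lambda>x. p x F) - lowsum P (\<nu> n) (\<lambda>x. p x F)\<bar> \<le> \<eta>"
        proof -
          have "\<bar>lowsum P g (\<lambda>x. p x F) - lowsum P (\<nu> n) (\<lambda>x. p x F)\<bar>
              = \<bar>\<Sum>B\<in>P. (INF x\<in>B. p x F) * (g B - \<nu> n B)\<bar>"
            unfolding lowsum_def by (simp add: sum_subtractf algebra_simps)
          also have "\<dots> \<le> (\<Sum>B\<in>P. \<bar>(INF x\<in>B. p x F) * (g B - \<nu> n B)\<bar>)" by (rule sum_abs)
          also have "\<dots> \<le> (\<Sum>B\<in>P. \<eta>')"
          proof (rule sum_mono)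
            fix B assume B: "B \<in> P"
            have Bp: "B \<noteq> {}" "B \<subseteq> space M" using part_props[OF P(1) B] by auto
            have i0: "0 \<le> (INF x\<in>B. p x F)" using Bp fm(3) by (intro cINF_greatest) auto
            obtain y where y: "y \<in> B" using Bp by blast
            have i1: "(INF x\<in>B. p x F) \<le> 1"
              using inf_le[OF fm(2) Bp(2) y] fm(4)[of y] Bp(2) y by force
            have "\<bar>g B - \<nu> n B\<bar> < \<eta>'" using n(3) B by (auto simp: abs_minus_commute)
            then have "\<bar>(INF x\<in>B. p x F)\<bar> * \<bar>g B - \<nu> n B\<bar> \<le> 1 * \<eta>'"
              using i0 i1 by (intro mult_mono) auto
            then show "\<bar>(INF x\<in>B. p x F) * (g B - \<nu> n B)\<bar> \<le> \<eta>'" by (simp add: abs_mult)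
          qed
          also have "\<dots> = real (card P) * \<eta>'" by simp
          also have "\<dots> \<le> \<eta>" using \<eta> by (simp add: \<eta>'_def field_simps)
          finally show ?thesis .
        qed
        have a4: "\<bar>markov_op M p (\<nu> n) F - \<nu> n F\<bar> < \<eta>"
        proof -
          have "1 / real (Suc n) \<le> 1 / real (Suc N)" using n(2) by (simp add: frac_le)
          then show ?thesis using inv[OF F, of n] N by linarith
        qed
        have a5: "\<bar>\<nu> n F - g F\<bar> < \<eta>" using n(3) \<eta>' by force
        show "\<bar>markov_op M p g F - g F\<bar> < \<delta>"
          using a1 a2 a3 a4 a5 \<eta>_def by (simp only: abs_le_iff abs_less_iff) linarith
      qed
      then show ?thesis by simp
    qed
  qed
  have "g \<in> Delta_ba M p" using gS ginv by (simp add: Delta_ba_def)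
  then have "g = \<mu>0" using D by blast
  then show False using gE0 \<epsilon> by simp
qed


theorem theorem4p7:
  fixes M :: "'a measure" and p :: "'a \<Rightarrow> 'a set \<Rightarrow> real"
    and m :: nat and \<mu> :: "nat \<Rightarrow> 'a set \<Rightarrow> real"
  assumes "infinite (space M)"
    and "\<forall>x\<in>space M. {x} \<in> sets M"
    and "transition_function M p"
    and "is_cycle M p m \<mu>"
    and "\<forall>i<m. \<mu> i \<in> S_ba M"
    and "Delta_ba M p = {mean_measure m \<mu>}"
  shows "(\<forall>i<m. countably_additive_on M (\<mu> i)) \<and> countably_additive_on M (mean_measure m \<mu>)"
proof -
  note tf = assms(3)
  define \<mu>0 where "\<mu>0 = mean_measure m \<mu>"
  have D: "Delta_ba M p = {\<mu>0}" using assms(6) by (simp add: \<mu>0_def)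
  have m1: "m \<ge> 1" using assms(4) by (simp add: is_cycle_def)
  have mu0S: "\<mu>0 \<in> S_ba M" using D by (auto simp: Delta_ba_def)
  obtain x0 where x0: "x0 \<in> space M" using assms(1) by (metis finite.emptyI ex_in_conv)
  define q where "q k = (markov_op M p ^^ k) (dirac_on M x0)" for k
  have qS: "q k \<in> S_ba M \<and> countably_additive_on M (q k)" for k
  proof (induction k)
    case 0 then show ?case using dirac_S_ba[OF x0] by (simp add: q_def)
  next
    case (Suc k)
    have "q (Suc k) = markov_op M p (q k)" by (simp add: q_def)
    then show ?case using markov_S_ba[OF tf] markov_ca[OF tf] Suc by simp
  qed
  have qsuc: "q (Suc k) = markov_op M p (q k)" for k by (simp add: q_def)
  have qf: "fa_on M (q k)" "pos_on M (q k)" for k using qS[of k] S_ba_props(1,2) by blast+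
  define \<nu> where "\<nu> n = (\<lambda>E. \<Sum>k<Suc n. (1 / real (Suc n)) * q k E)" for n
  have nuS: "\<nu> n \<in> S_ba M" for n
  proof -
    have fa: "fa_on M (\<nu> n)" unfolding \<nu>_def by (rule fa_on_comb) (use qf in auto)
    have pos: "pos_on M (\<nu> n)" unfolding \<nu>_def by (rule pos_on_comb) (use qf in auto)
    have q1: "q k (space M) = 1" for k using qS[of k] S_ba_props(3) by blast
    have one: "\<nu> n (space M) = 1" unfolding \<nu>_def q1 by simp
    have q0: "q k E = 0" if "E \<notin> sets M" for k E using qS[of k] S_ba_props(4) that by blast
    have z: "\<nu> n E = 0" if "E \<notin> sets M" for E unfolding \<nu>_def using q0[OF that] by simp
    show ?thesis by (rule S_baI[OF fa pos one z])
  qed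
  have nuca: "countably_additive_on M (\<nu> n)" for n
    unfolding countably_additive_on_def
  proof (intro allI impI)
    fix F :: "nat \<Rightarrow> 'a set" assume F: "range F \<subseteq> sets M" "disjoint_family F"
    have "(\<lambda>j. q k (F j)) sums q k (\<Union>j. F j)" for k
      using qS[of k] F unfolding countably_additive_on_def by blast
    then have "(\<lambda>j. (1 / real (Suc n)) * q k (F j)) sums ((1 / real (Suc n)) * q k (\<Union>j. F j))" for k
      by (rule sums_mult)
    then show "(\<lambda>j. \<nu> n (F j)) sums \<nu> n (\<Union>j. F j)" unfolding \<nu>_def by (rule sums_sum)
  qed
  have inv: "\<bar>markov_op M p (\<nu> n) F - \<nu> n F\<bar> \<le> 1 / real (Suc n)" if F: "F \<in> sets M" for n F
  proof -
    define c where "c = 1 / real (Suc n)"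
    have c: "c > 0" by (simp add: c_def)
    have "markov_op M p (\<nu> n) F = fa_integral M (\<nu> n) (\<lambda>x. p x F)" using F by (simp add: markov_op_def)
    also have "\<dots> = (\<Sum>k<Suc n. c * fa_integral M (q k) (\<lambda>x. p x F))"
      unfolding \<nu>_def c_def
      by (rule fa_int_comb) (use qf tf_meas[OF tf F] in auto)
    also have "\<dots> = (\<Sum>k<Suc n. c * q (Suc k) F)" using F by (simp add: qsuc markov_op_def)
    finally have "markov_op M p (\<nu> n) F - \<nu> n F = c * (\<Sum>k<Suc n. q (Suc k) F - q k F)"
      unfolding \<nu>_def c_def by (simp add: sum_distrib_left sum_subtractf algebra_simps)
    also have "\<dots> = c * (q (Suc n) F - q 0 F)" using sum_lessThan_telescope[of "\<lambda>k. q k F" "Suc n"] by simp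
    finally have e: "markov_op M p (\<nu> n) F - \<nu> n F = c * (q (Suc n) F - q 0 F)" .
    have "q (Suc n) F \<in> {0..1}" "q 0 F \<in> {0..1}" using S_ba_box qS by blast+
    then have "\<bar>q (Suc n) F - q 0 F\<bar> \<le> 1" by auto
    then have "\<bar>c * (q (Suc n) F - q 0 F)\<bar> \<le> c" using c by (simp add: abs_mult)
    then show ?thesis using e by (simp add: c_def)
  qed
  have conv: "(\<lambda>n. \<nu> n E) \<longlonglongrightarrow> \<mu>0 E" if "E \<in> sets M" for E
    by (rule cesaro_conv[OF tf D nuS inv that])
  have ca0: "countably_additive_on M \<mu>0" by (rule nikodym[OF nuS nuca mu0S conv])
  have cai: "countably_additive_on M (\<mu> i)" if i: "i < m" for i
  proof -
    have iS: "\<mu> i \<in> S_ba M" using assms(5) i by blast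
    show ?thesis
    proof (rule cont_imp_ca[OF S_ba_props(1)[OF iS]])
      fix G assume G: "\<And>n. G n \<in> sets M" "decseq G" "(\<Inter>n. G n) = {}"
      have l: "(\<lambda>n. real m * \<mu>0 (G n)) \<longlonglongrightarrow> real m * 0"
        by (intro tendsto_intros ca_cont[OF ca0 G])
      have le: "\<mu> i E \<le> real m * \<mu>0 E" for E
      proof -
        have "\<mu> i E \<le> (\<Sum>j<m. \<mu> j E)"
          using i assms(5) S_ba_props(6) by (intro member_le_sum) auto
        then show ?thesis using m1 by (simp add: \<mu>0_def mean_measure_def)
      qed
      show "(\<lambda>n. \<mu> i (G n)) \<longlonglongrightarrow> 0"
        by (rule tendsto_sandwich[of "\<lambda>_. 0" _ _ "\<lambda>n. real m * \<mu>0 (G n)"])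
          (use l le S_ba_props(6)[OF iS] in auto)
    qed
  qed
  show ?thesis using ca0 cai by (simp add: \<mu>0_def)
qed

end
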